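(* Let $(Q,P)$ be a weakly quasi-lattice ordered group and let $\Lambda$ be a $P$-graph with $\mathrm{FA}(\Lambda)\neq\emptyset$. Then the path groupoid $\mathcal{G}(\Lambda)$ and the boundary-path groupoid $\partial\mathcal{G}(\Lambda)$ are ample, second-countable and Hausdorff.
   Context: $(Q,P)$ weakly quasi-lattice ordered: $Q$ a discrete group, $P\subseteq Q$ a subsemigroup containing the identity $e$ with $P\cap P^{-1}=\{e\}$, and, with $p\le r$ meaning $pq=r$ for some $q\in P$, any two elements of $P$ with a common upper bound have a least common upper bound. A $P$-graph is a countable small category $\Lambda$ (identities $\Lambda^{(0)}$, range/source $r,s$) with a functor $d:\Lambda\to P$ with unique factorisation (if $d(\lambda)=pq$ then there are unique $\mu,\nu$ with $\lambda=\mu\nu$, $d(\mu)=p$, $d(\nu)=q$). Write $\Lambda^m=d^{-1}(m)$, $\lambda\Lambda=\{\lambda\mu: s(\lambda)=r(\mu)\}$, $\mu\preceq\lambda$ iff $\lambda\in\mu\Lambda$. $\mathrm{FA}(\Lambda)$ is the set of $\lambda$ such that for all $\mu\in\lambda\Lambda,\nu\in\Lambda$ there is finite $J\subseteq\Lambda$ with $\mu\Lambda\cap\nu\Lambda=\bigcup_{\kappa\in J}\kappa\Lambda$. A filter is a nonempty hereditary and directed subset of $\Lambda$ (w.r.t. $\preceq$); $\mathcal{F}(\Lambda)$ the filters, $\mathcal{U}(\Lambda)$ the maximal filters. $\mathcal{P}(\Lambda)$ has the product topology from $\{0,1\}^\Lambda$; subsets have subspace topology. Path space $\mathcal{X}(\Lambda)=\{x\in\mathcal{F}(\Lambda):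 x\cap\mathrm{FA}(\Lambda)\neq\emptyset\}$; boundary-path space $\partial\mathcal{X}(\Lambda)$ = closure of $\mathcal{U}(\Lambda)\cap\mathcal{X}(\Lambda)$ in $\mathcal{X}(\Lambda)$. For $x\in\mathcal{X}(\Lambda)$ and $m\in P$ with $x\cap\Lambda^m\neq\emptyset$ (write $x\in\mathrm{dom}(m)$), let $x(0,m)$ be the unique element of $x\cap\Lambda^m$ and $x\cdot m=\{\mu: x(0,m)\mu\in x\}\in\mathcal{X}(\Lambda)$. The path groupoid $\mathcal{G}(\Lambda)$ is the set of $(x,q,y)\in\mathcal{X}(\Lambda)\times Q\times\mathcal{X}(\Lambda)$ for which there are $m,n\in P$ with $q=mn^{-1}$, $x\in\mathrm{dom}(m)$, $y\in\mathrm{dom}(n)$, $x\cdot m=y\cdot n$; composable pairs are $((x,q,y),(y,r,z))$ with product $(x,qr,z)$, inverse $(x,q,y)^{-1}=(y,q^{-1},x)$; its topology has basis the sets $\{(x,mn^{-1},y)\in\mathcal{G}(\Lambda): x\in U, y\in V, x\cdot m=y\cdot n\}$ for $m,n\in P$ and $U,V\subseteq\mathcal{X}(\Lambda)$ open. The unit space is identified with $\mathcal{X}(\Lambda)$ via $x\mapsto(x,e,x)$. The boundary-path groupoid $\partial\mathcal{G}(\Lambda)$ is the reduction $\{g\in\mathcal{G}(\Lambda): r(g),s(g)\in\partial\mathcal{X}(\Lambda)\}$ with the subspace topology. A topological groupoid is étale if it is locally compact with locally compact Hausdorff unit space and the source map is a local homeomorphism; ample if moreover the unit space has a basis of compact open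 sets. *)

theory Defs
  imports "HOL-Analysis.Analysis"
begin

text \<open>The group Q is written additively (class group_add, not necessarily
commutative): the paper's product pq is p + q, the identity e is 0 and q^{-1} is - q.\<close>

definition wqlo_le :: "'q::group_add set \<Rightarrow> 'q \<Rightarrow> 'q \<Rightarrow> bool" where
  "wqlo_le P p r \<longleftrightarrow> (\<exists>q\<in>P. p + q = r)"

definition wqlo :: "'q::group_add set \<Rightarrow> bool" where
  "wqlo P \<longleftrightarrow>
     (\<forall>p\<in>P. \<forall>q\<in>P. p + q \<in> P) \<and> 0 \<in> P \<and> P \<inter> uminus ` P = {0} \<and>
     (\<forall>p\<in>P. \<forall>q\<in>P. (\<exists>r\<in>P. wqlo_le P p r \<and> wqlo_le P q r) \<longrightarrow>
        (\<exists>l\<in>P. wqlo_le P p l \<and> wqlo_le P q l \<and>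
           (\<forall>r\<in>P. wqlo_le P p r \<and> wqlo_le P q r \<longrightarrow> wqlo_le P l r)))"

text \<open>A small category given by its set of morphisms, source, range and a
composition (comp l m = l m, defined when src l = rng m).  Objects are identified
with identity morphisms.\<close>

record ('a, 'q) pgraph =
  mor :: "'a set"
  src :: "'a \<Rightarrow> 'a"
  rng :: "'a \<Rightarrow> 'a"
  comp :: "'a \<Rightarrow> 'a \<Rightarrow> 'a"
  deg :: "'a \<Rightarrow> 'q"

definition objs :: "('a, 'q) pgraph \<Rightarrow> 'a set" where
  "objs L = {v \<in> mor L. src L v = v}"

definition is_category :: "('a, 'q) pgraph \<Rightarrow> bool" where
  "is_category L \<longleftrightarrow>
     (\<forall>l\<in>mor L. src L l \<in> mor L \<and> rng L l \<in> mor L \<and>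
        src L (src L l) = src L l \<and> rng L (src L l) = src L l \<and>
        src L (rng L l) = rng L l \<and> rng L (rng L l) = rng L l) \<and>
     (\<forall>l\<in>mor L. \<forall>m\<in>mor L. src L l = rng L m \<longrightarrow>
        comp L l m \<in> mor L \<and> rng L (comp L l m) = rng L l \<and> src L (comp L l m) = src L m) \<and>
     (\<forall>l\<in>mor L. \<forall>m\<in>mor L. \<forall>n\<in>mor L. src L l = rng L m \<longrightarrow> src L m = rng L n \<longrightarrow>
        comp L (comp L l m) n = comp L l (comp L m n)) \<and>
     (\<forall>l\<in>mor L. comp L (rng L l) l = l \<and> comp L l (src L l) = l)"

definition is_Pgraph :: "'q::group_add set \<Rightarrow> ('a, 'q) pgraph \<Rightarrow> bool" where
  "is_Pgraph P L \<longleftrightarrow>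
     countable (mor L) \<and> is_category L \<and>
     (\<forall>l\<in>mor L. deg L l \<in> P) \<and>
     (\<forall>v\<in>objs L. deg L v = 0) \<and>
     (\<forall>l\<in>mor L. \<forall>m\<in>mor L. src L l = rng L m \<longrightarrow> deg L (comp L l m) = deg L l + deg L m) \<and>
     (\<forall>l\<in>mor L. \<forall>p\<in>P. \<forall>q\<in>P. deg L l = p + q \<longrightarrow>
        (\<exists>!(m, n). m \<in> mor L \<and> n \<in> mor L \<and> src L m = rng L n \<and>
                   l = comp L m n \<and> deg L m = p \<and> deg L n = q))"

definition degset :: "('a, 'q) pgraph \<Rightarrow> 'q \<Rightarrow> 'a set" where
  "degset L m = {l \<in> mor L. deg L l = m}"

definition ext :: "('a, 'q) pgraph \<Rightarrow> 'a \<Rightarrow> 'a set" where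
  "ext L l = {comp L l m | m. m \<in> mor L \<and> src L l = rng L m}"

definition prec :: "('a, 'q) pgraph \<Rightarrow> 'a \<Rightarrow> 'a \<Rightarrow> bool" where
  "prec L m l \<longleftrightarrow> m \<in> mor L \<and> l \<in> ext L m"

definition FA :: "('a, 'q) pgraph \<Rightarrow> 'a set" where
  "FA L = {l \<in> mor L. \<forall>m\<in>ext L l. \<forall>n\<in>mor L.
      \<exists>J. finite J \<and> J \<subseteq> mor L \<and> ext L m \<inter> ext L n = (\<Union>k\<in>J. ext L k)}"

definition is_filter :: "('a, 'q) pgraph \<Rightarrow> 'a set \<Rightarrow> bool" where
  "is_filter L x \<longleftrightarrow> x \<subseteq> mor L \<and> x \<noteq> {} \<and>
     (\<forall>l\<in>x. \<forall>m. prec L m l \<longrightarrow> m \<in> x) \<and>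
     (\<forall>l\<in>x. \<forall>m\<in>x. \<exists>n\<in>x. prec L l n \<and> prec L m n)"

definition filters :: "('a, 'q) pgraph \<Rightarrow> 'a set set" where
  "filters L = {x. is_filter L x}"

definition ultrafilters :: "('a, 'q) pgraph \<Rightarrow> 'a set set" where
  "ultrafilters L = {x \<in> filters L. \<forall>y\<in>filters L. x \<subseteq> y \<longrightarrow> y = x}"

definition powtop :: "('a, 'q) pgraph \<Rightarrow> 'a set topology" where
  "powtop L = pullback_topology (Pow (mor L)) (\<lambda>A. restrict (\<lambda>l. l \<in> A) (mor L))
      (product_topology (\<lambda>_. discrete_topology (UNIV :: bool set)) (mor L))"

definition pathspace :: "('a, 'q) pgraph \<Rightarrow> 'a set set" where
  "pathspace L = {x \<in> filters L. x \<inter> FA L \<noteq> {}}"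

definition pathtop :: "('a, 'q) pgraph \<Rightarrow> 'a set topology" where
  "pathtop L = subtopology (powtop L) (pathspace L)"

definition bdryspace :: "('a, 'q) pgraph \<Rightarrow> 'a set set" where
  "bdryspace L = pathtop L closure_of (ultrafilters L \<inter> pathspace L)"

definition in_dom :: "('a, 'q) pgraph \<Rightarrow> 'q \<Rightarrow> 'a set \<Rightarrow> bool" where
  "in_dom L m x \<longleftrightarrow> x \<in> pathspace L \<and> x \<inter> degset L m \<noteq> {}"

definition seg :: "('a, 'q) pgraph \<Rightarrow> 'a set \<Rightarrow> 'q \<Rightarrow> 'a" where
  "seg L x m = (THE l. l \<in> x \<inter> degset L m)"

definition shift :: "('a, 'q) pgraph \<Rightarrow> 'a set \<Rightarrow> 'q \<Rightarrow> 'a set" where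
  "shift L x m = {u \<in> mor L. src L (seg L x m) = rng L u \<and> comp L (seg L x m) u \<in> x}"

definition pathgpd :: "'q::group_add set \<Rightarrow> ('a, 'q) pgraph \<Rightarrow> ('a set \<times> 'q \<times> 'a set) set" where
  "pathgpd P L = {(x, q, y). x \<in> pathspace L \<and> y \<in> pathspace L \<and>
      (\<exists>m\<in>P. \<exists>n\<in>P. q = m + - n \<and> in_dom L m x \<and> in_dom L n y \<and> shift L x m = shift L y n)}"

definition gpd_basic_set :: "'q::group_add set \<Rightarrow> ('a, 'q) pgraph \<Rightarrow> 'q \<Rightarrow> 'q \<Rightarrow> 'a set set \<Rightarrow> 'a set set
    \<Rightarrow> ('a set \<times> 'q \<times> 'a set) set" where
  "gpd_basic_set P L m n U V = {(x, q, y) \<in> pathgpd P L. q = m + - n \<and> x \<in> U \<and> y \<in> V \<and>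
      in_dom L m x \<and> in_dom L n y \<and> shift L x m = shift L y n}"

definition pathgpd_top :: "'q::group_add set \<Rightarrow> ('a, 'q) pgraph \<Rightarrow> ('a set \<times> 'q \<times> 'a set) topology" where
  "pathgpd_top P L = topology_generated_by
      {gpd_basic_set P L m n U V | m n U V. m \<in> P \<and> n \<in> P \<and>
          openin (pathtop L) U \<and> openin (pathtop L) V}"

definition bdrygpd_top :: "'q::group_add set \<Rightarrow> ('a, 'q) pgraph \<Rightarrow> ('a set \<times> 'q \<times> 'a set) topology" where
  "bdrygpd_top P L = subtopology (pathgpd_top P L)
      {(x, q, y) \<in> pathgpd P L. x \<in> bdryspace L \<and> y \<in> bdryspace L}"

text \<open>For a groupoid whose elements are triples (x,q,y) with the operations of the
path groupoid, carried by topspace T: units are (x,0,x), source (y,0,y), range (x,0,x),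
composable pairs ((x,q,y),(y,r,z)) with product (x,q+r,z), inverse (y,-q,x).\<close>

definition tg_units :: "('x \<times> 'q::group_add \<times> 'x) topology \<Rightarrow> ('x \<times> 'q \<times> 'x) set" where
  "tg_units T = {g \<in> topspace T. fst (snd g) = 0 \<and> snd (snd g) = fst g}"

definition tg_src :: "('x \<times> 'q::group_add \<times> 'x) \<Rightarrow> ('x \<times> 'q \<times> 'x)" where
  "tg_src g = (snd (snd g), 0, snd (snd g))"

definition tg_inv :: "('x \<times> 'q::group_add \<times> 'x) \<Rightarrow> ('x \<times> 'q \<times> 'x)" where
  "tg_inv g = (snd (snd g), - fst (snd g), fst g)"

definition tg_mult :: "('x \<times> 'q::group_add \<times> 'x) \<times> ('x \<times> 'q \<times> 'x) \<Rightarrow> ('x \<times> 'q \<times> 'x)" where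
  "tg_mult gh = (fst (fst gh), fst (snd (fst gh)) + fst (snd (snd gh)), snd (snd (snd gh)))"

definition tg_composable :: "('x \<times> 'q::group_add \<times> 'x) topology \<Rightarrow> (('x \<times> 'q \<times> 'x) \<times> ('x \<times> 'q \<times> 'x)) set" where
  "tg_composable T = {(g, h). g \<in> topspace T \<and> h \<in> topspace T \<and> snd (snd g) = fst h}"

definition topological_groupoid :: "('x \<times> 'q::group_add \<times> 'x) topology \<Rightarrow> bool" where
  "topological_groupoid T \<longleftrightarrow>
     continuous_map T T tg_inv \<and>
     continuous_map (subtopology (prod_topology T T) (tg_composable T)) T tg_mult"

definition etale :: "('x \<times> 'q::group_add \<times> 'x) topology \<Rightarrow> bool" where
  "etale T \<longleftrightarrow> topological_groupoid T \<and> locally_compact_space T \<and>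
     locally_compact_space (subtopology T (tg_units T)) \<and>
     Hausdorff_space (subtopology T (tg_units T)) \<and>
     (\<forall>g\<in>topspace T. \<exists>W. openin T W \<and> g \<in> W \<and>
        openin (subtopology T (tg_units T)) (tg_src ` W) \<and>
        homeomorphic_map (subtopology T W) (subtopology T (tg_src ` W)) tg_src)"

definition ample :: "('x \<times> 'q::group_add \<times> 'x) topology \<Rightarrow> bool" where
  "ample T \<longleftrightarrow> etale T \<and>
     (\<forall>U x. openin (subtopology T (tg_units T)) U \<and> x \<in> U \<longrightarrow>
        (\<exists>K. compactin (subtopology T (tg_units T)) K \<and>
             openin (subtopology T (tg_units T)) K \<and> x \<in> K \<and> K \<subseteq> U))"

end

theory Submission
  imports Defs
begin

locale pg =
  fixes P :: "'q::group_add set" and L :: "('a,'q) pgraph"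
  assumes wq: "wqlo P" and pgr: "is_Pgraph P L"
begin

lemma cat: "is_category L" using pgr unfolding is_Pgraph_def by (elim conjE)
lemma degP_raw: "\<forall>l\<in>mor L. deg L l \<in> P" using pgr unfolding is_Pgraph_def by (elim conjE)
lemma degobj_raw: "\<forall>v\<in>objs L. deg L v = 0" using pgr unfolding is_Pgraph_def by (elim conjE)
lemma degcomp_raw: "\<forall>l\<in>mor L. \<forall>m\<in>mor L. src L l = rng L m \<longrightarrow> deg L (comp L l m) = deg L l + deg L m"
  using pgr unfolding is_Pgraph_def by (elim conjE)

lemma src_mor[simp]: "l \<in> mor L \<Longrightarrow> src L l \<in> mor L"
  and rng_mor[simp]: "l \<in> mor L \<Longrightarrow> rng L l \<in> mor L"
  and src_src[simp]: "l \<in> mor L \<Longrightarrow> src L (src L l) = src L l"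
  and rng_src[simp]: "l \<in> mor L \<Longrightarrow> rng L (src L l) = src L l"
  and src_rng[simp]: "l \<in> mor L \<Longrightarrow> src L (rng L l) = rng L l"
  and rng_rng[simp]: "l \<in> mor L \<Longrightarrow> rng L (rng L l) = rng L l"
  using cat unfolding is_category_def by auto

lemma comp_mor[simp]: "l \<in> mor L \<Longrightarrow> m \<in> mor L \<Longrightarrow> src L l = rng L m \<Longrightarrow> comp L l m \<in> mor L"
  and rng_comp[simp]: "l \<in> mor L \<Longrightarrow> m \<in> mor L \<Longrightarrow> src L l = rng L m \<Longrightarrow> rng L (comp L l m) = rng L l"
  and src_comp[simp]: "l \<in> mor L \<Longrightarrow> m \<in> mor L \<Longrightarrow> src L l = rng L m \<Longrightarrow> src L (comp L l m) = src L m"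
  using cat unfolding is_category_def by auto

lemma assoc: "l \<in> mor L \<Longrightarrow> m \<in> mor L \<Longrightarrow> n \<in> mor L \<Longrightarrow> src L l = rng L m \<Longrightarrow> src L m = rng L n \<Longrightarrow>
    comp L (comp L l m) n = comp L l (comp L m n)"
  using cat unfolding is_category_def by blast

lemma comp_rng[simp]: "l \<in> mor L \<Longrightarrow> comp L (rng L l) l = l"
  and comp_src[simp]: "l \<in> mor L \<Longrightarrow> comp L l (src L l) = l"
  using cat unfolding is_category_def by auto

lemma deg_P[simp]: "l \<in> mor L \<Longrightarrow> deg L l \<in> P"
  using degP_raw by blast

lemma deg_comp[simp]: "l \<in> mor L \<Longrightarrow> m \<in> mor L \<Longrightarrow> src L l = rng L m \<Longrightarrow> deg L (comp L l m) = deg L l + deg L m"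
  using degcomp_raw by blast

lemma deg_obj: "v \<in> mor L \<Longrightarrow> src L v = v \<Longrightarrow> deg L v = 0"
  using degobj_raw unfolding objs_def by blast

lemma deg_src[simp]: "l \<in> mor L \<Longrightarrow> deg L (src L l) = 0"
  and deg_rng[simp]: "l \<in> mor L \<Longrightarrow> deg L (rng L l) = 0"
  by (auto intro: deg_obj)

lemma countable_mor: "countable (mor L)"
  using pgr unfolding is_Pgraph_def by (elim conjE)

lemma uniq_raw: "\<forall>l\<in>mor L. \<forall>p\<in>P. \<forall>q\<in>P. deg L l = p + q \<longrightarrow>
        (\<exists>!(m, n). m \<in> mor L \<and> n \<in> mor L \<and> src L m = rng L n \<and>
                   l = comp L m n \<and> deg L m = p \<and> deg L n = q)"
  using pgr unfolding is_Pgraph_def by (elim conjE)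

lemma fact_ex: assumes "l \<in> mor L" "p \<in> P" "q \<in> P" "deg L l = p + q"
  shows "\<exists>m n. m \<in> mor L \<and> n \<in> mor L \<and> src L m = rng L n \<and> l = comp L m n \<and> deg L m = p \<and> deg L n = q"
proof -
  have "\<exists>!(m, n). m \<in> mor L \<and> n \<in> mor L \<and> src L m = rng L n \<and>
                   l = comp L m n \<and> deg L m = p \<and> deg L n = q"
    using uniq_raw assms by blast
  then show ?thesis by auto
qed

lemma fact_uniq: assumes "m \<in> mor L" "n \<in> mor L" "src L m = rng L n"
   "m' \<in> mor L" "n' \<in> mor L" "src L m' = rng L n'" "comp L m n = comp L m' n'" "deg L m = deg L m'"
  shows "m = m' \<and> n = n'"
proof -
  let ?l = "comp L m n"
  have dl: "deg L ?l = deg L m + deg L n" using deg_comp assms(1-3) by blast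
  have "deg L ?l = deg L m' + deg L n'" using deg_comp assms(4-7) by metis
  then have "deg L m + deg L n = deg L m + deg L n'" using dl assms(8) by simp
  then have dn: "deg L n = deg L n'" by simp
  have lm: "?l \<in> mor L" using assms by simp
  have "\<exists>!(a, b). a \<in> mor L \<and> b \<in> mor L \<and> src L a = rng L b \<and>
                   ?l = comp L a b \<and> deg L a = deg L m \<and> deg L b = deg L n"
    using uniq_raw lm deg_P assms(1,2) dl by blast
  then have "\<forall>x y. (case x of (a, b) \<Rightarrow> a \<in> mor L \<and> b \<in> mor L \<and> src L a = rng L b \<and>
                   ?l = comp L a b \<and> deg L a = deg L m \<and> deg L b = deg L n) \<and>
              (case y of (a, b) \<Rightarrow> a \<in> mor L \<and> b \<in> mor L \<and> src L a = rng L b \<and>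
                   ?l = comp L a b \<and> deg L a = deg L m \<and> deg L b = deg L n) \<longrightarrow> x = y"
    by blast
  from this[rule_format, of "(m,n)" "(m',n')"] show ?thesis using assms dn by auto
qed

lemma cancel: assumes "l \<in> mor L" "m \<in> mor L" "n \<in> mor L" "src L l = rng L m" "src L l = rng L n"
  "comp L l m = comp L l n" shows "m = n"
  using fact_uniq[of l m l n] assms by auto

lemma P0: "0 \<in> P" and Padd: "p \<in> P \<Longrightarrow> q \<in> P \<Longrightarrow> p + q \<in> P"
  using wq unfolding wqlo_def by auto

lemma le_refl: "p \<in> P \<Longrightarrow> wqlo_le P p p"
  using P0 unfolding wqlo_le_def by (metis add_0_right)

lemma le_trans: "wqlo_le P p q \<Longrightarrow> wqlo_le P q r \<Longrightarrow> wqlo_le P p r"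
  unfolding wqlo_le_def by (metis Padd add.assoc)

lemma le_comp: "l \<in> mor L \<Longrightarrow> m \<in> mor L \<Longrightarrow> src L l = rng L m \<Longrightarrow> wqlo_le P (deg L l) (deg L (comp L l m))"
  unfolding wqlo_le_def by auto

lemma lub: assumes "p \<in> P" "q \<in> P" "r \<in> P" "wqlo_le P p r" "wqlo_le P q r"
  shows "\<exists>l\<in>P. wqlo_le P p l \<and> wqlo_le P q l \<and>
           (\<forall>r\<in>P. wqlo_le P p r \<and> wqlo_le P q r \<longrightarrow> wqlo_le P l r)"
  using wq assms unfolding wqlo_def by blast

lemma prec_iff: "prec L m l \<longleftrightarrow> m \<in> mor L \<and> (\<exists>u. u \<in> mor L \<and> src L m = rng L u \<and> l = comp L m u)"
  unfolding prec_def ext_def by auto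

lemma ext_iff: "l \<in> ext L m \<longleftrightarrow> (\<exists>u. u \<in> mor L \<and> src L m = rng L u \<and> l = comp L m u)"
  unfolding ext_def by auto

lemma prec_mor: "prec L m l \<Longrightarrow> m \<in> mor L \<and> l \<in> mor L"
  unfolding prec_iff by auto

lemma prec_rng: "prec L m l \<Longrightarrow> rng L m = rng L l"
  unfolding prec_iff by auto

lemma prec_refl: "l \<in> mor L \<Longrightarrow> prec L l l"
  unfolding prec_iff by (rule conjI, simp, rule exI[of _ "src L l"], auto)

lemma prec_comp: "l \<in> mor L \<Longrightarrow> m \<in> mor L \<Longrightarrow> src L l = rng L m \<Longrightarrow> prec L l (comp L l m)"
  unfolding prec_iff by auto

lemma prec_trans: assumes "prec L a b" "prec L b c" shows "prec L a c"
proof -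
  obtain u where u: "u \<in> mor L" "src L a = rng L u" "b = comp L a u" "a \<in> mor L" using assms(1) prec_iff by auto
  obtain v where v: "v \<in> mor L" "src L b = rng L v" "c = comp L b v" using assms(2) prec_iff by auto
  have "c = comp L a (comp L u v)" using u v assoc by simp
  moreover have "src L u = rng L v" using u v by simp
  ultimately show ?thesis unfolding prec_iff using u v by (intro conjI exI[of _ "comp L u v"]) auto
qed

lemma prec_deg: "prec L m l \<Longrightarrow> wqlo_le P (deg L m) (deg L l)"
  unfolding prec_iff using le_comp by auto

lemma prec_same_deg: assumes "prec L m l" "prec L m' l" "deg L m = deg L m'" shows "m = m'"
proof -
  obtain u where u: "u \<in> mor L" "src L m = rng L u" "l = comp L m u" "m \<in> mor L" using assms(1) prec_iff by auto
  obtain v where v: "v \<in> mor L" "src L m' = rng L v" "l = comp L m' v" "m' \<in> mor L" using assms(2) prec_iff by auto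
  show ?thesis using fact_uniq[of m u m' v] u v assms(3) by auto
qed

lemma prec_deg_ex: assumes "l \<in> mor L" "p \<in> P" "wqlo_le P p (deg L l)"
  shows "\<exists>m. prec L m l \<and> deg L m = p"
proof -
  obtain q where "q \<in> P" "p + q = deg L l" using assms unfolding wqlo_le_def by auto
  then obtain m n where "m \<in> mor L" "n \<in> mor L" "src L m = rng L n" "l = comp L m n" "deg L m = p"
    using fact_ex[of l p q] assms by auto
  then show ?thesis unfolding prec_iff by auto
qed

lemma prec_between: assumes "prec L m l" "prec L m' l" "wqlo_le P (deg L m) (deg L m')"
  shows "prec L m m'"
proof -
  have "m' \<in> mor L" "m \<in> mor L" using assms prec_mor by auto
  then obtain k where k: "prec L k m'" "deg L k = deg L m" using prec_deg_ex[of m' "deg L m"] assms(3) by auto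
  then have "prec L k l" using prec_trans assms(2) by blast
  then have "k = m" using prec_same_deg assms(1) k by auto
  then show ?thesis using k by simp
qed

lemma prec_cancel: assumes "a \<in> mor L" "u \<in> mor L" "v \<in> mor L" "src L a = rng L u" "src L a = rng L v"
  and "prec L (comp L a u) (comp L a v)" shows "prec L u v"
proof -
  obtain w where w: "w \<in> mor L" "src L (comp L a u) = rng L w" "comp L a v = comp L (comp L a u) w"
    using assms(6) prec_iff by auto
  have "comp L a v = comp L a (comp L u w)" using w assms assoc by simp
  then have "v = comp L u w" using cancel[of a v "comp L u w"] assms w by simp
  then show ?thesis using w assms unfolding prec_iff by auto
qed

lemma prec_comp_mono: assumes "a \<in> mor L" "src L a = rng L u" "prec L u v"
  shows "prec L (comp L a u) (comp L a v)"
proof -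
  obtain w where w: "w \<in> mor L" "src L u = rng L w" "v = comp L u w" "u \<in> mor L"
    using assms(3) prec_iff by auto
  have "comp L a v = comp L (comp L a u) w" using w assms assoc by simp
  then show ?thesis using w assms unfolding prec_iff by auto
qed

lemma FA_ext: assumes "l \<in> FA L" "prec L l m" shows "m \<in> FA L"
proof -
  have "ext L m \<subseteq> ext L l"
  proof
    fix x assume "x \<in> ext L m"
    then have "prec L m x" using assms(2) prec_mor unfolding prec_def by auto
    then have "prec L l x" using assms(2) prec_trans by blast
    then show "x \<in> ext L l" unfolding prec_def by auto
  qed
  note sub = this
  have H: "\<forall>a\<in>ext L l. \<forall>n\<in>mor L.
      \<exists>J. finite J \<and> J \<subseteq> mor L \<and> ext L a \<inter> ext L n = (\<Union>k\<in>J. ext L k)"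
    using assms(1) unfolding FA_def by simp
  have mm: "m \<in> mor L" using assms(2) prec_mor by auto
  show ?thesis unfolding FA_def
  proof (intro CollectI conjI ballI mm)
    fix a n assume "a \<in> ext L m" "n \<in> mor L"
    then have "a \<in> ext L l" using sub by auto
    then show "\<exists>J. finite J \<and> J \<subseteq> mor L \<and> ext L a \<inter> ext L n = (\<Union>k\<in>J. ext L k)"
      using H \<open>n \<in> mor L\<close> by blast
  qed
qed

end

definition sh :: "('a,'q) pgraph \<Rightarrow> 'a set \<Rightarrow> 'a \<Rightarrow> 'a set" where
  "sh L x a = {u \<in> mor L. src L a = rng L u \<and> comp L a u \<in> x}"

definition pre :: "('a,'q) pgraph \<Rightarrow> 'a \<Rightarrow> 'a set \<Rightarrow> 'a set" where
  "pre L a z = {m. \<exists>n\<in>z. n \<in> mor L \<and> src L a = rng L n \<and> prec L m (comp L a n)}"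

context pg begin

lemma F_sub: "is_filter L x \<Longrightarrow> x \<subseteq> mor L" unfolding is_filter_def by auto
lemma F_her: "is_filter L x \<Longrightarrow> l \<in> x \<Longrightarrow> prec L m l \<Longrightarrow> m \<in> x" unfolding is_filter_def by auto
lemma F_dir: "is_filter L x \<Longrightarrow> l \<in> x \<Longrightarrow> m \<in> x \<Longrightarrow> \<exists>n\<in>x. prec L l n \<and> prec L m n"
  unfolding is_filter_def by auto
lemma F_ne: "is_filter L x \<Longrightarrow> x \<noteq> {}" unfolding is_filter_def by auto

lemma F_I: assumes "x \<subseteq> mor L" "x \<noteq> {}" "\<And>l m. l \<in> x \<Longrightarrow> prec L m l \<Longrightarrow> m \<in> x"
  "\<And>l m. l \<in> x \<Longrightarrow> m \<in> x \<Longrightarrow> \<exists>n\<in>x. prec L l n \<and> prec L m n" shows "is_filter L x"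
  using assms unfolding is_filter_def by auto

lemma F_deg_uniq: assumes "is_filter L x" "l \<in> x" "l' \<in> x" "deg L l = deg L l'" shows "l = l'"
proof -
  obtain n where "prec L l n" "prec L l' n" using F_dir assms by blast
  then show ?thesis using prec_same_deg assms by blast
qed

lemma F_rng: assumes "is_filter L x" "l \<in> x" "l' \<in> x" shows "rng L l = rng L l'"
proof -
  obtain n where "prec L l n" "prec L l' n" using F_dir assms by blast
  then show ?thesis using prec_rng by metis
qed

lemma prec_rng_self: "l \<in> mor L \<Longrightarrow> prec L (rng L l) l"
  unfolding prec_iff by (intro conjI exI[of _ l]) auto

lemma F_rng_in: "is_filter L x \<Longrightarrow> l \<in> x \<Longrightarrow> rng L l \<in> x"
  using F_her prec_rng_self F_sub by blast

lemma F_lub: assumes "is_filter L x" "l \<in> x" "l' \<in> x" "t \<in> P" "wqlo_le P (deg L l) t" "wqlo_le P (deg L l') t"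
  "\<forall>r\<in>P. wqlo_le P (deg L l) r \<and> wqlo_le P (deg L l') r \<longrightarrow> wqlo_le P t r"
  shows "\<exists>k\<in>x. deg L k = t \<and> prec L l k \<and> prec L l' k"
proof -
  obtain n where n: "n \<in> x" "prec L l n" "prec L l' n" using F_dir assms by blast
  have nm: "n \<in> mor L" using n prec_mor by auto
  have "wqlo_le P t (deg L n)" using assms(7) n prec_deg nm deg_P by blast
  then obtain k where k: "prec L k n" "deg L k = t" using prec_deg_ex nm assms(4) by blast
  have "k \<in> x" using F_her assms(1) n k by blast
  moreover have "prec L l k" using prec_between[OF n(2) k(1)] k(2) assms(5) by simp
  moreover have "prec L l' k" using prec_between[OF n(3) k(1)] k(2) assms(6) by simp
  ultimately show ?thesis using k by blast
qed

lemma seg_eq: assumes "is_filter L x" "l \<in> x" shows "seg L x (deg L l) = l"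
proof -
  have "l \<in> x \<inter> degset L (deg L l)" using assms F_sub unfolding degset_def by auto
  moreover have "\<And>l'. l' \<in> x \<inter> degset L (deg L l) \<Longrightarrow> l' = l"
    using F_deg_uniq assms unfolding degset_def by auto
  ultimately show ?thesis unfolding seg_def by (rule the_equality)
qed

lemma in_dom_ex: "in_dom L m x \<Longrightarrow> \<exists>l\<in>x. deg L l = m"
  unfolding in_dom_def degset_def by auto

lemma shift_eq: "is_filter L x \<Longrightarrow> l \<in> x \<Longrightarrow> shift L x (deg L l) = sh L x l"
  unfolding shift_def sh_def using seg_eq by simp

lemma sh_sub: "sh L x a \<subseteq> mor L" unfolding sh_def by auto

lemma sh_filter: assumes "is_filter L x" "a \<in> x" shows "is_filter L (sh L x a)"
proof (rule F_I)
  have am: "a \<in> mor L" using assms F_sub by auto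
  show "sh L x a \<subseteq> mor L" by (rule sh_sub)
  show "sh L x a \<noteq> {}" using am assms unfolding sh_def by (auto intro!: exI[of _ "src L a"])
  fix l m assume l: "l \<in> sh L x a"
  { assume pm: "prec L m l"
    then obtain w where w: "w \<in> mor L" "src L m = rng L w" "l = comp L m w" "m \<in> mor L"
      using prec_iff by auto
    have "src L a = rng L m" using l pm prec_rng unfolding sh_def by auto
    then have "prec L (comp L a m) (comp L a l)" using prec_comp_mono am pm by auto
    then have "comp L a m \<in> x" using F_her assms(1) l unfolding sh_def by auto
    then show "m \<in> sh L x a" using w \<open>src L a = rng L m\<close> unfolding sh_def by auto }
  assume m: "m \<in> sh L x a"
  obtain n where n: "n \<in> x" "prec L (comp L a l) n" "prec L (comp L a m) n"
    using F_dir assms(1) l m unfolding sh_def by blast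
  obtain w where w: "w \<in> mor L" "src L (comp L a l) = rng L w" "n = comp L (comp L a l) w"
    using n prec_iff by auto
  have lm: "l \<in> mor L" "src L a = rng L l" "m \<in> mor L" "src L a = rng L m" using l m unfolding sh_def by auto
  have n2: "n = comp L a (comp L l w)" using w lm am assoc by simp
  have "src L l = rng L w" using w lm am by simp
  then have cm: "comp L l w \<in> mor L" "rng L (comp L l w) = src L a" using lm w by auto
  have "comp L l w \<in> sh L x a" using cm n n2 unfolding sh_def by auto
  moreover have "prec L l (comp L l w)" using prec_comp lm w \<open>src L l = rng L w\<close> by auto
  moreover have "prec L m (comp L l w)"
    using prec_cancel[of a m "comp L l w"] n n2 am lm cm by auto
  ultimately show "\<exists>n\<in>sh L x a. prec L l n \<and> prec L m n" by blast
qed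

lemma src_in_sh: assumes "is_filter L x" "a \<in> x" shows "src L a \<in> sh L x a"
proof -
  have "a \<in> mor L" using F_sub assms by auto
  then show ?thesis using assms unfolding sh_def by auto
qed

lemma sh_rng: "u \<in> sh L x a \<Longrightarrow> rng L u = src L a" unfolding sh_def by auto

lemma sh_mono: "x \<subseteq> y \<Longrightarrow> sh L x a \<subseteq> sh L y a" unfolding sh_def by auto

lemma sh_sh: assumes "a \<in> mor L" "b \<in> mor L" "src L a = rng L b"
  shows "sh L (sh L x a) b = sh L x (comp L a b)"
proof (rule set_eqI)
  fix u
  have sab: "src L (comp L a b) = src L b" using assms by simp
  show "u \<in> sh L (sh L x a) b \<longleftrightarrow> u \<in> sh L x (comp L a b)"
  proof (cases "u \<in> mor L \<and> src L b = rng L u")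
    case True
    have "comp L (comp L a b) u = comp L a (comp L b u)" using assoc assms True by simp
    moreover have "comp L b u \<in> mor L" "rng L (comp L b u) = src L a" using True assms by auto
    ultimately show ?thesis using True sab unfolding sh_def by auto
  next
    case False
    then show ?thesis using sab unfolding sh_def by auto
  qed
qed

lemma pre_filter: assumes "is_filter L z" "a \<in> mor L" "src L a \<in> z"
  shows "is_filter L (pre L a z)" and "a \<in> pre L a z"
proof -
  have zr: "\<And>n. n \<in> z \<Longrightarrow> rng L n = src L a"
    using F_rng[OF assms(1) _ assms(3)] assms(2) by simp
  have zm: "\<And>n. n \<in> z \<Longrightarrow> n \<in> mor L" using F_sub assms(1) by auto
  show "a \<in> pre L a z" unfolding pre_def using assms
    by (intro CollectI bexI[of _ "src L a"]) (auto intro: prec_refl)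
  show "is_filter L (pre L a z)"
  proof (rule F_I)
    show "pre L a z \<subseteq> mor L" unfolding pre_def using prec_mor by auto
    show "pre L a z \<noteq> {}" using \<open>a \<in> pre L a z\<close> by auto
    fix l m assume l: "l \<in> pre L a z"
    then obtain n where n: "n \<in> z" "prec L l (comp L a n)" unfolding pre_def by auto
    { assume "prec L m l"
      then have "prec L m (comp L a n)" using prec_trans n(2) by blast
      moreover have "n \<in> mor L" "src L a = rng L n" using zr zm n by auto
      ultimately show "m \<in> pre L a z" unfolding pre_def using n(1) by blast }
    assume "m \<in> pre L a z"
    then obtain n' where n': "n' \<in> z" "prec L m (comp L a n')" unfolding pre_def by auto
    obtain k where k: "k \<in> z" "prec L n k" "prec L n' k" using F_dir assms(1) n n' by blast
    have "prec L (comp L a n) (comp L a k)" using prec_comp_mono assms(2) zr k n by auto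
    moreover have "prec L (comp L a n') (comp L a k)" using prec_comp_mono assms(2) zr k n' by auto
    moreover have "comp L a k \<in> pre L a z" unfolding pre_def using k zr zm assms(2)
      by (intro CollectI bexI[of _ k]) (auto intro: prec_refl)
    ultimately show "\<exists>n\<in>pre L a z. prec L l n \<and> prec L m n" using n n' prec_trans by blast
  qed
qed

lemma sh_pre: assumes "is_filter L z" "a \<in> mor L" "src L a \<in> z"
  shows "sh L (pre L a z) a = z"
proof -
  have zr: "\<And>n. n \<in> z \<Longrightarrow> rng L n = src L a"
    using F_rng[OF assms(1) _ assms(3)] assms(2) by simp
  have zm: "\<And>n. n \<in> z \<Longrightarrow> n \<in> mor L" using F_sub assms(1) by auto
  show ?thesis
  proof
    show "sh L (pre L a z) a \<subseteq> z"
    proof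
      fix u assume "u \<in> sh L (pre L a z) a"
      then obtain n where u: "u \<in> mor L" "src L a = rng L u" "n \<in> z" "prec L (comp L a u) (comp L a n)"
        unfolding sh_def pre_def by auto
      then have "prec L u n" using prec_cancel assms(2) zr zm by auto
      then show "u \<in> z" using F_her assms(1) u by blast
    qed
    show "z \<subseteq> sh L (pre L a z) a"
    proof
      fix u assume "u \<in> z"
      then show "u \<in> sh L (pre L a z) a" unfolding sh_def pre_def using zr zm assms(2)
        by (auto intro!: bexI[of _ u] prec_refl)
    qed
  qed
qed

lemma pre_sh: assumes "is_filter L x" "a \<in> x"
  shows "pre L a (sh L x a) = x"
proof
  have am: "a \<in> mor L" using assms F_sub by auto
  show "pre L a (sh L x a) \<subseteq> x"
  proof
    fix m assume "m \<in> pre L a (sh L x a)"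
    then obtain n where "n \<in> sh L x a" "prec L m (comp L a n)" unfolding pre_def by auto
    then show "m \<in> x" using F_her assms(1) unfolding sh_def by auto
  qed
  show "x \<subseteq> pre L a (sh L x a)"
  proof
    fix m assume m: "m \<in> x"
    obtain n where n: "n \<in> x" "prec L m n" "prec L a n" using F_dir assms m by blast
    then obtain w where w: "w \<in> mor L" "src L a = rng L w" "n = comp L a w" using prec_iff by auto
    have "w \<in> sh L x a" using w n unfolding sh_def by auto
    then show "m \<in> pre L a (sh L x a)" unfolding pre_def using w n by auto
  qed
qed

lemma ultra_max: "x \<in> ultrafilters L \<Longrightarrow> is_filter L y \<Longrightarrow> x \<subseteq> y \<Longrightarrow> y = x"
  unfolding ultrafilters_def filters_def by auto

lemma ultra_filter: "x \<in> ultrafilters L \<Longrightarrow> is_filter L x"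
  unfolding ultrafilters_def filters_def by auto

lemma ultra_I: "is_filter L x \<Longrightarrow> (\<And>y. is_filter L y \<Longrightarrow> x \<subseteq> y \<Longrightarrow> y = x) \<Longrightarrow> x \<in> ultrafilters L"
  unfolding ultrafilters_def filters_def by auto

lemma ultra_pre: assumes "z \<in> ultrafilters L" "a \<in> mor L" "src L a \<in> z"
  shows "pre L a z \<in> ultrafilters L"
proof (rule ultra_I)
  have zf: "is_filter L z" using ultra_filter assms by auto
  show "is_filter L (pre L a z)" using pre_filter zf assms by auto
  fix F assume F: "is_filter L F" "pre L a z \<subseteq> F"
  have aF: "a \<in> F" using F pre_filter zf assms by auto
  have "sh L (pre L a z) a \<subseteq> sh L F a" using sh_mono[OF F(2)] .
  then have "z \<subseteq> sh L F a" using sh_pre[OF zf assms(2,3)] by simp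
  then have "sh L F a = z" using ultra_max assms(1) sh_filter F aF by auto
  then show "F = pre L a z" using pre_sh F aF by auto
qed

lemma ultra_sh: assumes "y \<in> ultrafilters L" "b \<in> y"
  shows "sh L y b \<in> ultrafilters L"
proof (rule ultra_I)
  have yf: "is_filter L y" using ultra_filter assms by auto
  have bm: "b \<in> mor L" using yf assms F_sub by auto
  show "is_filter L (sh L y b)" using sh_filter yf assms by auto
  fix F assume F: "is_filter L F" "sh L y b \<subseteq> F"
  have sF: "src L b \<in> F" using F src_in_sh yf assms by auto
  have "y \<subseteq> pre L b F"
  proof -
    have "pre L b (sh L y b) \<subseteq> pre L b F" using F(2) unfolding pre_def by blast
    then show ?thesis using pre_sh yf assms by auto
  qed
  then have "pre L b F = y" using ultra_max assms(1) pre_filter F sF bm by auto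
  then show "F = sh L y b" using sh_pre F sF bm by auto
qed

end

definition ptop :: "'a set \<Rightarrow> 'a set topology" where
  "ptop M = pullback_topology (Pow M) (\<lambda>A. restrict (\<lambda>l. l \<in> A) M)
      (product_topology (\<lambda>_. discrete_topology (UNIV :: bool set)) M)"

definition NB :: "'a set \<Rightarrow> 'a set \<Rightarrow> 'a set \<Rightarrow> 'a set set" where
  "NB M F G = {A \<in> Pow M. F \<subseteq> A \<and> G \<inter> A = {}}"

lemma powtop_ptop: "powtop L = ptop (mor L)"
  unfolding powtop_def ptop_def by simp

lemma ptop_space[simp]: "topspace (ptop M) = Pow M"
  unfolding ptop_def topspace_pullback_topology by (auto simp: PiE_def)

lemma restrict_inj: "A \<subseteq> M \<Longrightarrow> B \<subseteq> M \<Longrightarrow> restrict (\<lambda>l. l \<in> A) M = restrict (\<lambda>l. l \<in> B) M \<Longrightarrow> A = B"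
  by (metis (mono_tags, lifting) restrict_apply' subset_antisym subset_iff)

lemma ptop_open: "openin (ptop M) S \<longleftrightarrow> S \<subseteq> Pow M \<and>
   (\<forall>A\<in>S. \<exists>F G. finite F \<and> finite G \<and> F \<subseteq> M \<and> G \<subseteq> M \<and> A \<in> NB M F G \<and> NB M F G \<subseteq> S)"
  (is "?l \<longleftrightarrow> ?r")
proof
  let ?i = "\<lambda>A. restrict (\<lambda>l. l \<in> A) M"
  let ?T = "product_topology (\<lambda>_. discrete_topology (UNIV :: bool set)) M"
  assume ?l
  then obtain U where U: "openin ?T U" "S = ?i -` U \<inter> Pow M"
    unfolding ptop_def openin_pullback_topology by auto
  show ?r
  proof (intro conjI ballI)
    show "S \<subseteq> Pow M" using U by auto
    fix A assume A: "A \<in> S"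
    then have "?i A \<in> U" using U by auto
    then obtain V where V: "finite {i \<in> M. V i \<noteq> UNIV}" "?i A \<in> PiE M V" "PiE M V \<subseteq> U"
      using U(1) unfolding openin_product_topology_alt by auto
    define I where "I = {i \<in> M. V i \<noteq> UNIV}"
    define F where "F = {i \<in> I. i \<in> A}"
    define G where "G = {i \<in> I. i \<notin> A}"
    have fin: "finite F" "finite G"
      by (rule finite_subset[OF _ V(1)], auto simp: F_def G_def I_def)+
    have sub: "F \<subseteq> M" "G \<subseteq> M" unfolding F_def G_def I_def by auto
    have AN: "A \<in> NB M F G" using A U unfolding NB_def F_def G_def by auto
    have "NB M F G \<subseteq> S"
    proof
      fix B assume B: "B \<in> NB M F G"
      have "?i B \<in> PiE M V"
      proof (rule PiE_I)
        fix i assume i: "i \<in> M"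
        show "?i B i \<in> V i"
        proof (cases "V i = UNIV")
          case False
          then have "i \<in> I" using i unfolding I_def by auto
          then have "(i \<in> B) = (i \<in> A)" using B unfolding NB_def F_def G_def by auto
          moreover have "?i A i \<in> V i" using V(2) i by (auto simp: PiE_def Pi_def)
          ultimately show ?thesis using i by simp
        qed simp
      qed auto
      then have "?i B \<in> U" using V(3) by blast
      then show "B \<in> S" using U(2) B unfolding NB_def by blast
    qed
    then show "\<exists>F G. finite F \<and> finite G \<and> F \<subseteq> M \<and> G \<subseteq> M \<and> A \<in> NB M F G \<and> NB M F G \<subseteq> S"
      using fin sub AN by blast
  qed
next
  let ?i = "\<lambda>A. restrict (\<lambda>l. l \<in> A) M"
  let ?T = "product_topology (\<lambda>_. discrete_topology (UNIV :: bool set)) M"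
  assume r: ?r
  have "openin ?T (?i ` S)"
    unfolding openin_product_topology_alt
  proof (intro ballI)
    fix f assume "f \<in> ?i ` S"
    then obtain A where A: "A \<in> S" "f = ?i A" by auto
    have r2: "\<forall>A\<in>S. \<exists>F G. finite F \<and> finite G \<and> F \<subseteq> M \<and> G \<subseteq> M \<and> A \<in> NB M F G \<and> NB M F G \<subseteq> S"
      using r by (rule conjunct2)
    obtain F G where FG: "finite F" "finite G" "F \<subseteq> M" "G \<subseteq> M" "A \<in> NB M F G" "NB M F G \<subseteq> S"
      using r2[rule_format, OF A(1)] by (elim exE conjE)
    define V where "V = (\<lambda>i. if i \<in> F \<union> G then {f i} else (UNIV :: bool set))"
    have "{i \<in> M. V i \<noteq> topspace (discrete_topology UNIV)} \<subseteq> F \<union> G" by (auto simp: V_def)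
    then have "finite {i \<in> M. V i \<noteq> topspace (discrete_topology UNIV)}"
      using FG(1,2) by (meson finite_Un finite_subset)
    moreover have "f \<in> PiE M V" using A unfolding V_def by (auto simp: PiE_def)
    moreover have "PiE M V \<subseteq> ?i ` S"
    proof
      fix g assume g: "g \<in> PiE M V"
      define B where "B = {i \<in> M. g i}"
      have "?i B = g"
      proof
        fix i show "?i B i = g i"
          using g unfolding B_def by (cases "i \<in> M") (auto simp: PiE_def extensional_def)
      qed
      moreover have "B \<in> NB M F G"
      proof -
        have "\<And>i. i \<in> F \<union> G \<Longrightarrow> g i = f i" using g FG unfolding V_def by (auto simp: PiE_def Pi_def)
        then show ?thesis using FG A unfolding B_def NB_def by auto
      qed
      ultimately show "g \<in> ?i ` S" using FG by blast
    qed
    ultimately show "\<exists>U. finite {i \<in> M. U i \<noteq> topspace (discrete_topology UNIV)} \<and>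
              (\<forall>i\<in>M. openin (discrete_topology UNIV) (U i)) \<and> f \<in> PiE M U \<and> PiE M U \<subseteq> ?i ` S"
      by auto
  qed
  moreover have "S = ?i -` (?i ` S) \<inter> Pow M"
  proof
    have SP: "S \<subseteq> Pow M" using r by (rule conjunct1)
    then show "S \<subseteq> ?i -` (?i ` S) \<inter> Pow M" by blast
    show "?i -` (?i ` S) \<inter> Pow M \<subseteq> S"
    proof
      fix B assume "B \<in> ?i -` (?i ` S) \<inter> Pow M"
      then obtain A where "A \<in> S" "?i B = ?i A" "B \<subseteq> M" by auto
      moreover then have "A \<subseteq> M" using SP by auto
      ultimately show "B \<in> S" using restrict_inj[of B M A] by simp
    qed
  qed
  ultimately show ?l unfolding ptop_def openin_pullback_topology by blast
qed

lemma NB_open: "finite F \<Longrightarrow> finite G \<Longrightarrow> F \<subseteq> M \<Longrightarrow> G \<subseteq> M \<Longrightarrow> openin (ptop M) (NB M F G)"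
  unfolding ptop_open by (auto simp: NB_def)

lemma NB_mono: "F \<subseteq> F' \<Longrightarrow> G \<subseteq> G' \<Longrightarrow> NB M F' G' \<subseteq> NB M F G"
  unfolding NB_def by auto

lemma fin_preimage_open:
  assumes "finite F" "finite G" "F \<subseteq> M" "G \<subseteq> M"
    and "\<And>l. l \<in> M \<Longrightarrow> openin Y {y \<in> topspace Y. l \<in> f y}"
    and "\<And>l. l \<in> M \<Longrightarrow> openin Y {y \<in> topspace Y. l \<notin> f y}"
  shows "openin Y {y \<in> topspace Y. F \<subseteq> f y \<and> G \<inter> f y = {}}"
  using assms(1,3)
proof (induction F rule: finite_induct)
  case empty
  show ?case using assms(2,4)
  proof (induction G rule: finite_induct)
    case empty then show ?case by simp
  next
    case (insert g G)
    have "{y \<in> topspace Y. {} \<subseteq> f y \<and> insert g G \<inter> f y = {}} =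
       {y \<in> topspace Y. {} \<subseteq> f y \<and> G \<inter> f y = {}} \<inter> {y \<in> topspace Y. g \<notin> f y}" by auto
    then show ?case using insert assms(6) by auto
  qed
next
  case (insert h F)
  have "{y \<in> topspace Y. insert h F \<subseteq> f y \<and> G \<inter> f y = {}} =
       {y \<in> topspace Y. F \<subseteq> f y \<and> G \<inter> f y = {}} \<inter> {y \<in> topspace Y. h \<in> f y}" by auto
  then show ?case using insert assms(5) by auto
qed

lemma cont_ptop:
  assumes "\<And>y. y \<in> topspace Y \<Longrightarrow> f y \<subseteq> M"
    and "\<And>l. l \<in> M \<Longrightarrow> openin Y {y \<in> topspace Y. l \<in> f y}"
    and "\<And>l. l \<in> M \<Longrightarrow> openin Y {y \<in> topspace Y. l \<notin> f y}"
  shows "continuous_map Y (ptop M) f"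
  unfolding continuous_map
proof (intro conjI allI impI)
  show "f ` topspace Y \<subseteq> topspace (ptop M)" using assms(1) by (simp add: image_subset_iff)
  fix U assume U: "openin (ptop M) U"
  show "openin Y {x \<in> topspace Y. f x \<in> U}"
  proof (subst openin_subopen, intro ballI)
    fix y assume y: "y \<in> {x \<in> topspace Y. f x \<in> U}"
    have "\<forall>A\<in>U. \<exists>F G. finite F \<and> finite G \<and> F \<subseteq> M \<and> G \<subseteq> M \<and> A \<in> NB M F G \<and> NB M F G \<subseteq> U"
      using ptop_open[THEN iffD1, OF U] by (rule conjunct2)
    note H = this
    have fyU: "f y \<in> U" using y by simp
    obtain F G where FG: "finite F" "finite G" "F \<subseteq> M" "G \<subseteq> M" "f y \<in> NB M F G" "NB M F G \<subseteq> U"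
      using bspec[OF H fyU] by blast
    let ?T = "{y \<in> topspace Y. F \<subseteq> f y \<and> G \<inter> f y = {}}"
    have "openin Y ?T" by (rule fin_preimage_open[OF FG(1-4) assms(2,3)])
    moreover have "y \<in> ?T" using y FG(5) unfolding NB_def by auto
    moreover have "?T \<subseteq> {x \<in> topspace Y. f x \<in> U}"
    proof
      fix x assume x: "x \<in> ?T"
      then have "f x \<in> NB M F G" using assms(1)[of x] unfolding NB_def by auto
      then show "x \<in> {x \<in> topspace Y. f x \<in> U}" using x FG(6) by auto
    qed
    ultimately show "\<exists>T. openin Y T \<and> y \<in> T \<and> T \<subseteq> {x \<in> topspace Y. f x \<in> U}" by blast
  qed
qed

lemma ptop_compact: "compactin (ptop M) (Pow M)"
proof -
  let ?T = "product_topology (\<lambda>_. discrete_topology (UNIV :: bool set)) M"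
  let ?k = "\<lambda>f. {l \<in> M. f l}"
  have "compact_space ?T"
    unfolding compact_space_product_topology by (auto simp: compact_space_discrete_topology)
  then have c: "compactin ?T (topspace ?T)" unfolding compact_space_def .
  have h1: "\<And>y. y \<in> topspace ?T \<Longrightarrow> ?k y \<subseteq> M" by blast
  have h2: "openin ?T {y \<in> topspace ?T. l \<in> ?k y}" and h3: "openin ?T {y \<in> topspace ?T. l \<notin> ?k y}"
    if l: "l \<in> M" for l
  proof -
    have pc: "continuous_map ?T (discrete_topology UNIV) (\<lambda>f. f l)"
      by (rule continuous_map_product_projection[OF l])
    have e1: "{y \<in> topspace ?T. l \<in> ?k y} = {y \<in> topspace ?T. y l \<in> {True}}" using l by blast
    show "openin ?T {y \<in> topspace ?T. l \<in> ?k y}"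
      unfolding e1 by (rule openin_continuous_map_preimage[OF pc]) simp
    have e2: "{y \<in> topspace ?T. l \<notin> ?k y} = {y \<in> topspace ?T. y l \<in> {False}}" using l by blast
    show "openin ?T {y \<in> topspace ?T. l \<notin> ?k y}"
      unfolding e2 by (rule openin_continuous_map_preimage[OF pc]) simp
  qed
  have "continuous_map ?T (ptop M) ?k" by (rule cont_ptop[OF h1 h2 h3])
  then have "compactin (ptop M) (?k ` topspace ?T)" using image_compactin c by blast
  moreover have "?k ` topspace ?T = Pow M"
  proof
    show "?k ` topspace ?T \<subseteq> Pow M" by auto
    show "Pow M \<subseteq> ?k ` topspace ?T"
    proof
      fix A assume "A \<in> Pow M"
      then have "?k (restrict (\<lambda>l. l \<in> A) M) = A" by auto
      moreover have "restrict (\<lambda>l. l \<in> A) M \<in> topspace ?T" by (auto simp: PiE_def)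
      ultimately show "A \<in> ?k ` topspace ?T" by (rule image_eqI[OF sym])
    qed
  qed
  ultimately show ?thesis by simp
qed

lemma ptop_Hausdorff: "Hausdorff_space (ptop M)"
  unfolding Hausdorff_space_def
proof (intro allI impI)
  fix x y assume xy: "x \<in> topspace (ptop M) \<and> y \<in> topspace (ptop M) \<and> x \<noteq> y"
  then have "x \<subseteq> M" "y \<subseteq> M" "x \<noteq> y" by auto
  then obtain l where l: "l \<in> M" "(l \<in> x \<and> l \<notin> y) \<or> (l \<notin> x \<and> l \<in> y)" by blast
  have o1: "openin (ptop M) (NB M {l} {})" "openin (ptop M) (NB M {} {l})" using l by (auto intro!: NB_open)
  have d: "disjnt (NB M {l} {}) (NB M {} {l})" "disjnt (NB M {} {l}) (NB M {l} {})" by (auto simp: NB_def disjnt_def)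
  have xyM: "x \<subseteq> M" "y \<subseteq> M" using xy by auto
  show "\<exists>U V. openin (ptop M) U \<and> openin (ptop M) V \<and> x \<in> U \<and> y \<in> V \<and> disjnt U V"
  proof (cases "l \<in> x")
    case True
    then have "x \<in> NB M {l} {}" "y \<in> NB M {} {l}" using l xyM unfolding NB_def by auto
    then show ?thesis using o1 d by blast
  next
    case False
    then have "x \<in> NB M {} {l}" "y \<in> NB M {l} {}" using l xyM unfolding NB_def by auto
    then show ?thesis using o1 d by blast
  qed
qed

lemma ptop_second_countable: assumes "countable M" shows "second_countable (ptop M)"
  unfolding second_countable_def
proof (intro exI conjI)
  let ?B = "(\<lambda>(F, G). NB M F G) ` ({F. finite F \<and> F \<subseteq> M} \<times> {F. finite F \<and> F \<subseteq> M})"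
  show "countable ?B" using countable_Collect_finite_subset[OF assms] by auto
  show "\<forall>V\<in>?B. openin (ptop M) V" by (auto intro: NB_open)
  show "\<forall>U x. openin (ptop M) U \<and> x \<in> U \<longrightarrow> (\<exists>V\<in>?B. x \<in> V \<and> V \<subseteq> U)"
  proof (intro allI impI)
    fix U x assume Ux: "openin (ptop M) U \<and> x \<in> U"
    have "\<forall>A\<in>U. \<exists>F G. finite F \<and> finite G \<and> F \<subseteq> M \<and> G \<subseteq> M \<and> A \<in> NB M F G \<and> NB M F G \<subseteq> U"
      using ptop_open[THEN iffD1, OF conjunct1[OF Ux]] by (rule conjunct2)
    note H = this
    obtain F G where FG: "finite F" "finite G" "F \<subseteq> M" "G \<subseteq> M" "x \<in> NB M F G" "NB M F G \<subseteq> U"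
      using bspec[OF H conjunct2[OF Ux]] by blast
    have "(F, G) \<in> {F. finite F \<and> F \<subseteq> M} \<times> {F. finite F \<and> F \<subseteq> M}" using FG by auto
    then have "NB M F G \<in> ?B" by (rule rev_image_eqI) simp
    then show "\<exists>V\<in>?B. x \<in> V \<and> V \<subseteq> U"
    proof (rule bexI[rotated])
      show "x \<in> NB M F G \<and> NB M F G \<subseteq> U" using FG(5,6) by blast
    qed
  qed
qed


context pg begin

lemma pathspace_sub: "pathspace L \<subseteq> Pow (mor L)"
  unfolding pathspace_def filters_def using F_sub by auto

lemma pathtop_eq: "pathtop L = subtopology (ptop (mor L)) (pathspace L)"
  unfolding pathtop_def powtop_ptop ..

lemma pathtop_space[simp]: "topspace (pathtop L) = pathspace L"
  unfolding pathtop_eq using pathspace_sub by auto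

lemma pathspace_filter: "x \<in> pathspace L \<Longrightarrow> is_filter L x"
  unfolding pathspace_def filters_def by auto

lemma pathspace_FA: "x \<in> pathspace L \<Longrightarrow> \<exists>l\<in>x. l \<in> FA L"
  unfolding pathspace_def by auto

lemma pathspace_I: "is_filter L x \<Longrightarrow> l \<in> x \<Longrightarrow> l \<in> FA L \<Longrightarrow> x \<in> pathspace L"
  unfolding pathspace_def filters_def by blast

lemma NB_open_path: "finite F \<Longrightarrow> finite G \<Longrightarrow> F \<subseteq> mor L \<Longrightarrow> G \<subseteq> mor L \<Longrightarrow>
    openin (pathtop L) (NB (mor L) F G \<inter> pathspace L)"
  unfolding pathtop_eq by (intro openin_subtopology_Int NB_open)

lemma Z_open: "a \<in> mor L \<Longrightarrow> openin (pathtop L) {x \<in> pathspace L. a \<in> x}"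
proof -
  assume a: "a \<in> mor L"
  have "{x \<in> pathspace L. a \<in> x} = NB (mor L) {a} {} \<inter> pathspace L"
    using pathspace_sub unfolding NB_def by auto
  then show ?thesis using NB_open_path[of "{a}" "{}"] a by simp
qed

lemma nZ_open: "a \<in> mor L \<Longrightarrow> openin (pathtop L) {x \<in> pathspace L. a \<notin> x}"
proof -
  assume a: "a \<in> mor L"
  have "{x \<in> pathspace L. a \<notin> x} = NB (mor L) {} {a} \<inter> pathspace L"
    using pathspace_sub unfolding NB_def by auto
  then show ?thesis using NB_open_path[of "{}" "{a}"] a by simp
qed

lemma pathtop_Hausdorff: "Hausdorff_space (pathtop L)"
  unfolding pathtop_eq by (rule Hausdorff_space_subtopology[OF ptop_Hausdorff])

lemma pathtop_second_countable: "second_countable (pathtop L)"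
  unfolding pathtop_eq by (rule second_countable_subtopology[OF ptop_second_countable[OF countable_mor]])

lemma cont_pathtop:
  assumes "\<And>y. y \<in> topspace Y \<Longrightarrow> f y \<in> pathspace L"
    and "\<And>l. l \<in> mor L \<Longrightarrow> openin Y {y \<in> topspace Y. l \<in> f y}"
    and "\<And>l. l \<in> mor L \<Longrightarrow> openin Y {y \<in> topspace Y. l \<notin> f y}"
  shows "continuous_map Y (pathtop L) f"
proof -
  have h1: "\<And>y. y \<in> topspace Y \<Longrightarrow> f y \<subseteq> mor L" using assms(1) pathspace_sub by blast
  have "continuous_map Y (ptop (mor L)) f" by (rule cont_ptop[OF h1 assms(2,3)])
  then show ?thesis unfolding pathtop_eq continuous_map_in_subtopology using assms(1) by blast
qed

lemma ext_prec: "a \<in> mor L \<Longrightarrow> b \<in> ext L a \<longleftrightarrow> prec L a b"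
  unfolding prec_def by auto

lemma FA_J: assumes "l \<in> FA L" "prec L l m" "n \<in> mor L"
  obtains J where "finite J" "J \<subseteq> mor L" "\<And>k. prec L m k \<and> prec L n k \<longleftrightarrow> (\<exists>j\<in>J. prec L j k)"
proof -
  have "m \<in> ext L l" using assms(2) unfolding prec_def by auto
  then obtain J where J: "finite J" "J \<subseteq> mor L" "ext L m \<inter> ext L n = (\<Union>k\<in>J. ext L k)"
    using assms(1,3) unfolding FA_def by blast
  have mm: "m \<in> mor L" using assms(2) prec_mor by auto
  have "\<And>k. prec L m k \<and> prec L n k \<longleftrightarrow> (\<exists>j\<in>J. prec L j k)"
  proof -
    fix k
    have "prec L m k \<and> prec L n k \<longleftrightarrow> k \<in> ext L m \<inter> ext L n" using mm assms(3) ext_prec by auto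
    also have "\<dots> \<longleftrightarrow> (\<exists>j\<in>J. k \<in> ext L j)" using J(3) by auto
    also have "\<dots> \<longleftrightarrow> (\<exists>j\<in>J. prec L j k)" using J(2) ext_prec by auto
    finally show "prec L m k \<and> prec L n k \<longleftrightarrow> (\<exists>j\<in>J. prec L j k)" .
  qed
  then show ?thesis using that J by blast
qed

lemma filter_closed:
  assumes lam: "lam \<in> FA L"
  shows "closedin (ptop (mor L)) {A \<in> Pow (mor L). is_filter L A \<and> lam \<in> A}"
  unfolding closedin_def
proof (intro conjI)
  let ?K = "{A \<in> Pow (mor L). is_filter L A \<and> lam \<in> A}"
  let ?M = "mor L"
  show "?K \<subseteq> topspace (ptop ?M)" by auto
  have lm: "lam \<in> mor L" using lam unfolding FA_def by auto
  show "openin (ptop ?M) (topspace (ptop ?M) - ?K)"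
    unfolding ptop_open
  proof (intro conjI ballI)
    show "topspace (ptop ?M) - ?K \<subseteq> Pow ?M" by auto
    fix A assume A: "A \<in> topspace (ptop ?M) - ?K"
    then have AM: "A \<subseteq> ?M" by auto
    have goal: "\<exists>F G. finite F \<and> finite G \<and> F \<subseteq> ?M \<and> G \<subseteq> ?M \<and> A \<in> NB ?M F G \<and> NB ?M F G \<subseteq> topspace (ptop ?M) - ?K"
      if F: "finite F" "finite G" "F \<subseteq> ?M" "G \<subseteq> ?M" "A \<in> NB ?M F G"
        and dis: "\<And>B. B \<in> NB ?M F G \<Longrightarrow> is_filter L B \<Longrightarrow> lam \<in> B \<Longrightarrow> False" for F G
    proof -
      have "NB ?M F G \<subseteq> topspace (ptop ?M) - ?K" using dis unfolding NB_def by auto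
      then show ?thesis using F by blast
    qed
    show "\<exists>F G. finite F \<and> finite G \<and> F \<subseteq> ?M \<and> G \<subseteq> ?M \<and> A \<in> NB ?M F G \<and> NB ?M F G \<subseteq> topspace (ptop ?M) - ?K"
    proof (cases "lam \<in> A")
      case False
      show ?thesis by (rule goal[of "{}" "{lam}"]) (use False AM lm in \<open>auto simp: NB_def\<close>)
    next
      case True
      then have nf: "\<not> is_filter L A" using A by auto
      show ?thesis
      proof (cases "\<forall>l\<in>A. \<forall>m. prec L m l \<longrightarrow> m \<in> A")
        case False
        then obtain l m where lm2: "l \<in> A" "prec L m l" "m \<notin> A" by blast
        have "m \<in> ?M" using lm2 prec_mor by auto
        show ?thesis
        proof (rule goal[of "{l}" "{m}"])
          show "A \<in> NB ?M {l} {m}" using lm2 AM unfolding NB_def by auto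
          fix B assume "B \<in> NB ?M {l} {m}" "is_filter L B"
          then show False using F_her lm2 unfolding NB_def by blast
        qed (use lm2 AM \<open>m \<in> ?M\<close> in auto)
      next
        case her: True
        have "\<not> (\<forall>l\<in>A. \<forall>m\<in>A. \<exists>n\<in>A. prec L l n \<and> prec L m n)"
          using nf her AM True unfolding is_filter_def by blast
        then obtain l m where lm2: "l \<in> A" "m \<in> A" "\<not> (\<exists>n\<in>A. prec L l n \<and> prec L m n)" by blast
        have lM: "l \<in> ?M" "m \<in> ?M" using lm2 AM by auto
        obtain J1 where J1: "finite J1" "J1 \<subseteq> ?M" "\<And>k. prec L lam k \<and> prec L l k \<longleftrightarrow> (\<exists>j\<in>J1. prec L j k)"
          using FA_J[OF lam prec_refl[OF lm] lM(1)] by blast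
        show ?thesis
        proof (cases "J1 \<inter> A = {}")
          case True
          show ?thesis
          proof (rule goal[of "{lam, l}" J1])
            show "A \<in> NB ?M {lam, l} J1" using True lm2 AM \<open>lam \<in> A\<close> unfolding NB_def by auto
            fix B assume B: "B \<in> NB ?M {lam, l} J1" "is_filter L B"
            then obtain n where n: "n \<in> B" "prec L lam n" "prec L l n" using F_dir[of B lam l] unfolding NB_def by auto
            then obtain j where j: "j \<in> J1" "prec L j n" using J1(3) by blast
            then have "j \<in> B" using F_her B(2) n by blast
            then show False using B(1) j unfolding NB_def by auto
          qed (use J1 lm lM in auto)
        next
          case False
          then obtain k1 where k1: "k1 \<in> J1" "k1 \<in> A" by blast
          have k1M: "k1 \<in> ?M" using k1 J1 by auto
          have pk: "prec L lam k1" "prec L l k1" using J1(3)[of k1] k1 prec_refl[OF k1M] by auto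
          have k1FA: "k1 \<in> FA L" using FA_ext lam pk by blast
          obtain J2 where J2: "finite J2" "J2 \<subseteq> ?M" "\<And>k. prec L k1 k \<and> prec L m k \<longleftrightarrow> (\<exists>j\<in>J2. prec L j k)"
            using FA_J[OF k1FA prec_refl[OF k1M] lM(2)] by blast
          have J2A: "J2 \<inter> A = {}"
          proof (rule ccontr)
            assume "J2 \<inter> A \<noteq> {}"
            then obtain k2 where k2: "k2 \<in> J2" "k2 \<in> A" by blast
            have "k2 \<in> ?M" using k2 J2 by auto
            then have "prec L k1 k2" "prec L m k2" using J2(3)[of k2] k2 prec_refl by auto
            then show False using lm2(3) k2 pk prec_trans by blast
          qed
          show ?thesis
          proof (rule goal[of "{k1, m}" J2])
            show "A \<in> NB ?M {k1, m} J2" using J2A lm2 AM k1 unfolding NB_def by auto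
            fix B assume B: "B \<in> NB ?M {k1, m} J2" "is_filter L B"
            then obtain n where n: "n \<in> B" "prec L k1 n" "prec L m n" using F_dir[of B k1 m] unfolding NB_def by auto
            then obtain j where j: "j \<in> J2" "prec L j n" using J2(3) by blast
            then have "j \<in> B" using F_her B(2) n by blast
            then show False using B(1) j unfolding NB_def by auto
          qed (use J2 k1M lM in auto)
        qed
      qed
    qed
  qed
qed

lemma ample_X: assumes "openin (pathtop L) U" "x \<in> U"
  shows "\<exists>K. compactin (pathtop L) K \<and> openin (pathtop L) K \<and> x \<in> K \<and> K \<subseteq> U"
proof -
  obtain T where T: "openin (ptop (mor L)) T" "U = T \<inter> pathspace L"
    using assms(1) unfolding pathtop_eq openin_subtopology by blast
  have xT: "x \<in> T" "x \<in> pathspace L" using T assms by auto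
  have "\<forall>A\<in>T. \<exists>F G. finite F \<and> finite G \<and> F \<subseteq> mor L \<and> G \<subseteq> mor L \<and> A \<in> NB (mor L) F G \<and> NB (mor L) F G \<subseteq> T"
    using ptop_open[THEN iffD1, OF T(1)] by (rule conjunct2)
  note H = this
  obtain F G where FG: "finite F" "finite G" "F \<subseteq> mor L" "G \<subseteq> mor L" "x \<in> NB (mor L) F G" "NB (mor L) F G \<subseteq> T"
    using bspec[OF H xT(1)] by blast
  obtain lam where lam: "lam \<in> x" "lam \<in> FA L" using pathspace_FA xT by blast
  have lm: "lam \<in> mor L" using lam unfolding FA_def by auto
  let ?K = "NB (mor L) (insert lam F) G \<inter> pathspace L"
  have Keq: "?K = NB (mor L) (insert lam F) G \<inter> {A \<in> Pow (mor L). is_filter L A \<and> lam \<in> A}"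
    using pathspace_filter pathspace_I[OF _ _ lam(2)] unfolding NB_def by auto
  have "closedin (ptop (mor L)) (NB (mor L) (insert lam F) G)"
  proof -
    have "NB (mor L) (insert lam F) G = topspace (ptop (mor L)) - (\<Union>l\<in>insert lam F. NB (mor L) {} {l}) - (\<Union>l\<in>G. NB (mor L) {l} {})"
      unfolding NB_def by auto
    moreover have "openin (ptop (mor L)) (\<Union>l\<in>insert lam F. NB (mor L) {} {l})"
      using FG lm by (intro openin_Union) (auto intro!: NB_open)
    moreover have "openin (ptop (mor L)) (\<Union>l\<in>G. NB (mor L) {l} {})"
      using FG by (intro openin_Union) (auto intro!: NB_open)
    ultimately show ?thesis by (metis closedin_diff closedin_topspace Diff_Diff_Int closedin_def openin_diff)
  qed
  then have "closedin (ptop (mor L)) ?K" unfolding Keq using filter_closed[OF lam(2)] by (rule closedin_Int)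
  then have "compactin (ptop (mor L)) ?K" using ptop_compact closed_compactin by (metis Int_lower2 Pow_top pathspace_sub subset_trans inf.cobounded2 closedin_subset ptop_space)
  then have "compactin (pathtop L) ?K" unfolding pathtop_eq compactin_subtopology by auto
  moreover have "openin (pathtop L) ?K" using NB_open_path FG lm by auto
  moreover have "x \<in> ?K" using FG lam xT unfolding NB_def by auto
  moreover have "?K \<subseteq> U"
  proof -
    have "NB (mor L) (insert lam F) G \<subseteq> NB (mor L) F G" by (rule NB_mono) auto
    then show ?thesis using FG(6) T(2) by auto
  qed
  ultimately show ?thesis by blast
qed

end

definition wit :: "'q::group_add set \<Rightarrow> ('a,'q) pgraph \<Rightarrow> 'a set \<Rightarrow> 'q \<Rightarrow> 'a set \<Rightarrow> 'q \<Rightarrow> 'q \<Rightarrow> bool" where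
  "wit P L x q y m n \<longleftrightarrow> m \<in> P \<and> n \<in> P \<and> q = m + - n \<and> in_dom L m x \<and> in_dom L n y \<and> shift L x m = shift L y n"

lemma gi1: fixes m n a d s :: "'q::group_add"
  assumes "m + - n = a + - d" shows "n + (- m + s) = d + (- a + s)"
proof -
  have "- (m + - n) = - (a + - d)" using assms by simp
  then have "n + - m = d + - a" by (simp add: minus_add)
  then show ?thesis by (metis add.assoc)
qed

lemma gi2: fixes a b p :: "'q::group_add" shows "(a + p) + - (b + p) = a + - b"
proof -
  have "(a + p) + - (b + p) = a + (p + (- p + - b))" by (simp only: minus_add add.assoc)
  also have "\<dots> = a + - b" by (simp only: add_minus_cancel)
  finally show ?thesis .
qed

lemma gi3: fixes a d :: "'q::group_add" shows "- (a + - d) = d + - a"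
  by (simp add: minus_add)

lemma gi4: fixes a t d :: "'q::group_add" shows "(a + - t) + (t + - d) = a + - d"
proof -
  have "(a + - t) + (t + - d) = a + (- t + (t + - d))" by (simp only: add.assoc)
  also have "\<dots> = a + - d" by (simp only: minus_add_cancel)
  finally show ?thesis .
qed

lemma gi5: fixes m u :: "'q::group_add" shows "- m + (m + u) = u"
  by (simp add: add.assoc[symmetric])

context pg begin

abbreviation "XX \<equiv> pathspace L"
abbreviation "GG \<equiv> pathgpd P L"
abbreviation "TT \<equiv> pathgpd_top P L"
abbreviation "Bs \<equiv> gpd_basic_set P L"

lemma G_iff: "(x, q, y) \<in> GG \<longleftrightarrow> x \<in> XX \<and> y \<in> XX \<and> (\<exists>m n. wit P L x q y m n)"
  unfolding pathgpd_def wit_def by blast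

lemma B_iff: "m \<in> P \<Longrightarrow> n \<in> P \<Longrightarrow> (x, q, y) \<in> Bs m n U V \<longleftrightarrow> (x, q, y) \<in> GG \<and> wit P L x q y m n \<and> x \<in> U \<and> y \<in> V"
  unfolding gpd_basic_set_def wit_def by auto

lemma B_sub: "Bs m n U V \<subseteq> GG"
  unfolding gpd_basic_set_def by auto

lemma B_mono: "U \<subseteq> U' \<Longrightarrow> V \<subseteq> V' \<Longrightarrow> Bs m n U V \<subseteq> Bs m n U' V'"
  unfolding gpd_basic_set_def by auto

lemma wit_P: "wit P L x q y m n \<Longrightarrow> m \<in> P \<and> n \<in> P" unfolding wit_def by auto

lemma wit_E: assumes "wit P L x q y m n" "x \<in> XX" "y \<in> XX"
  obtains a b where "a \<in> x" "b \<in> y" "deg L a = m" "deg L b = n" "sh L x a = sh L y b" "q = m + - n"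
proof -
  obtain a where a: "a \<in> x" "deg L a = m" using assms in_dom_ex unfolding wit_def by blast
  obtain b where b: "b \<in> y" "deg L b = n" using assms in_dom_ex unfolding wit_def by blast
  have "shift L x m = shift L y n" "q = m + - n" using assms unfolding wit_def by auto
  then have "sh L x a = sh L y b" using shift_eq[OF pathspace_filter[OF assms(2)] a(1)]
    shift_eq[OF pathspace_filter[OF assms(3)] b(1)] a b by simp
  then show ?thesis using that a b \<open>q = m + - n\<close> by blast
qed

lemma in_dom_I: "x \<in> XX \<Longrightarrow> a \<in> x \<Longrightarrow> in_dom L (deg L a) x"
  unfolding in_dom_def degset_def using F_sub pathspace_filter by blast

lemma wit_I: assumes "x \<in> XX" "y \<in> XX" "a \<in> x" "b \<in> y" "sh L x a = sh L y b" "q = deg L a + - deg L b"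
  shows "wit P L x q y (deg L a) (deg L b)"
proof -
  have am: "a \<in> mor L" "b \<in> mor L" using assms F_sub pathspace_filter by blast+
  show ?thesis unfolding wit_def
    using am deg_P in_dom_I assms shift_eq[OF pathspace_filter[OF assms(1)] assms(3)]
      shift_eq[OF pathspace_filter[OF assms(2)] assms(4)] by simp
qed

lemma XX_open: "openin (pathtop L) XX"
  using openin_topspace[of "pathtop L"] by simp

lemma T_space: "topspace TT = GG"
proof -
  let ?S = "{Bs m n U V | m n U V. m \<in> P \<and> n \<in> P \<and> openin (pathtop L) U \<and> openin (pathtop L) V}"
  have "\<Union>?S = GG"
  proof
    show "\<Union>?S \<subseteq> GG" using B_sub by blast
    show "GG \<subseteq> \<Union>?S"
    proof
      fix g assume g: "g \<in> GG"
      obtain x q y where gx: "g = (x, q, y)" by (cases g) auto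
      then obtain m n where w: "wit P L x q y m n" "x \<in> XX" "y \<in> XX" using g G_iff by auto
      then have "g \<in> Bs m n XX XX" using B_iff[of m n] wit_P[OF w(1)] g gx by auto
      moreover have "Bs m n XX XX \<in> ?S" using w wit_P XX_open by blast
      ultimately show "g \<in> \<Union>?S" by blast
    qed
  qed
  then show ?thesis unfolding pathgpd_top_def by simp
qed

lemma B_open: "m \<in> P \<Longrightarrow> n \<in> P \<Longrightarrow> openin (pathtop L) U \<Longrightarrow> openin (pathtop L) V \<Longrightarrow> openin TT (Bs m n U V)"
  unfolding pathgpd_top_def by (rule topology_generated_by_Basis) blast

lemma sh_mem: "u \<in> sh L x a \<longleftrightarrow> u \<in> mor L \<and> src L a = rng L u \<and> comp L a u \<in> x"
  unfolding sh_def by auto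

lemma EQ: assumes mn: "m \<in> P" "n \<in> P" and oUV: "openin (pathtop L) U" "openin (pathtop L) V" and g: "(x, q, z) \<in> Bs m n U V" and w: "wit P L x q z a d"
  shows "\<exists>U' V'. openin (pathtop L) U' \<and> openin (pathtop L) V' \<and> (x, q, z) \<in> Bs a d U' V' \<and> Bs a d U' V' \<subseteq> Bs m n U V"
proof -
  have gG: "(x, q, z) \<in> GG" and wm: "wit P L x q z m n" and xU: "x \<in> U" and zV: "z \<in> V" using g B_iff[OF mn] by auto
  have xX: "x \<in> XX" and zX: "z \<in> XX" using gG G_iff by auto
  have xf: "is_filter L x" and zf: "is_filter L z" using xX zX pathspace_filter by auto
  obtain am nn where am: "am \<in> x" "nn \<in> z" "deg L am = m" "deg L nn = n" "sh L x am = sh L z nn" "q = m + - n"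
    using wit_E[OF wm xX zX] by blast
  obtain aa dd where aa: "aa \<in> x" "dd \<in> z" "deg L aa = a" "deg L dd = d" "sh L x aa = sh L z dd" "q = a + - d"
    using wit_E[OF w xX zX] by blast
  have mor1: "am \<in> mor L" "aa \<in> mor L" "nn \<in> mor L" "dd \<in> mor L" using am aa xf zf F_sub by blast+
  obtain n0 where n0: "n0 \<in> x" "prec L am n0" "prec L aa n0" using F_dir[OF xf am(1) aa(1)] by blast
  have n0m: "n0 \<in> mor L" using n0 prec_mor by auto
  obtain s where s: "s \<in> P" "wqlo_le P m s" "wqlo_le P a s"
     "\<forall>r\<in>P. wqlo_le P m r \<and> wqlo_le P a r \<longrightarrow> wqlo_le P s r"
    using lub[of m a "deg L n0"] prec_deg[OF n0(2)] prec_deg[OF n0(3)] am aa mor1 n0m deg_P by auto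
  obtain als where als: "als \<in> x" "deg L als = s" "prec L am als" "prec L aa als"
    using F_lub[OF xf am(1) aa(1), of s] s am(3) aa(3) by auto
  obtain r1 where r1: "r1 \<in> mor L" "src L am = rng L r1" "als = comp L am r1" using als(3) prec_iff by auto
  obtain r2 where r2: "r2 \<in> mor L" "src L aa = rng L r2" "als = comp L aa r2" using als(4) prec_iff by auto
  have r1x: "r1 \<in> sh L x am" using r1 als(1) sh_mem by auto
  have r2x: "r2 \<in> sh L x aa" using r2 als(1) sh_mem by auto
  have z1: "comp L nn r1 \<in> z" "src L nn = rng L r1" using r1x am(5) sh_mem by auto
  have z2: "comp L dd r2 \<in> z" "src L dd = rng L r2" using r2x aa(5) sh_mem by auto
  have "deg L als = deg L am + deg L r1" using r1 mor1 deg_comp by metis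
  moreover have "deg L als = deg L aa + deg L r2" using r2 mor1 deg_comp by metis
  ultimately have ds: "s = m + deg L r1" "s = a + deg L r2" using als(2) am(3) aa(3) by auto
  have "deg L (comp L nn r1) = n + deg L r1" using z1 mor1 r1 am(4) by simp
  also have "\<dots> = n + (- m + s)" using ds(1) gi5 by metis
  also have "\<dots> = d + (- a + s)" using gi1 am(6) aa(6) by metis
  also have "\<dots> = d + deg L r2" using ds(2) gi5 by metis
  also have "\<dots> = deg L (comp L dd r2)" using z2 mor1 r2 aa(4) by simp
  finally have "comp L nn r1 = comp L dd r2" using F_deg_uniq zf z1 z2 by blast
  define ze where "ze = comp L nn r1"
  have ze: "ze \<in> z" "ze = comp L dd r2" unfolding ze_def using z1 \<open>comp L nn r1 = comp L dd r2\<close> by auto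
  have zem: "ze \<in> mor L" using ze zf F_sub by auto
  define U' where "U' = U \<inter> {x \<in> XX. als \<in> x}"
  define V' where "V' = V \<inter> {x \<in> XX. ze \<in> x}"
  have alsm: "als \<in> mor L" using als xf F_sub by auto
  have oU: "openin (pathtop L) U'" "openin (pathtop L) V'"
    using oUV Z_open alsm zem unfolding U'_def V'_def
    by (auto intro!: openin_Int)
  have ad: "a \<in> P" "d \<in> P" using wit_P[OF w] by auto
  have "(x, q, z) \<in> Bs a d U' V'" unfolding B_iff[OF ad] U'_def V'_def using gG w xU zV xX zX als(1) ze(1) by auto
  moreover have "Bs a d U' V' \<subseteq> Bs m n U V"
  proof
    fix g' assume g': "g' \<in> Bs a d U' V'"
    obtain x' q' z' where gx: "g' = (x', q', z')" by (cases g') auto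
    have g'G: "(x', q', z') \<in> GG" and w': "wit P L x' q' z' a d" and x'U: "x' \<in> U'" and z'V: "z' \<in> V'"
      using g' gx B_iff[OF ad] by auto
    have x'X: "x' \<in> XX" and z'X: "z' \<in> XX" using g'G G_iff by auto
    have xf': "is_filter L x'" and zf': "is_filter L z'" using x'X z'X pathspace_filter by auto
    have alsx: "als \<in> x'" and zez: "ze \<in> z'" using x'U z'V unfolding U'_def V'_def by auto
    have amx: "am \<in> x'" using F_her[OF xf' alsx als(3)] .
    have aax: "aa \<in> x'" using F_her[OF xf' alsx als(4)] .
    have nnz: "nn \<in> z'" using F_her[OF zf' zez] prec_comp[OF mor1(3) r1(1) z1(2)] unfolding ze_def by blast
    have ddz: "dd \<in> z'" using F_her[OF zf' zez] prec_comp[OF mor1(4) r2(1) z2(2)] ze(2) by blast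
    obtain aa' dd' where aa': "aa' \<in> x'" "dd' \<in> z'" "deg L aa' = a" "deg L dd' = d" "sh L x' aa' = sh L z' dd'" "q' = a + - d"
      using wit_E[OF w' x'X z'X] by blast
    have "aa' = aa" using F_deg_uniq[OF xf' aa'(1) aax] aa'(3) aa(3) by simp
    moreover have "dd' = dd" using F_deg_uniq[OF zf' aa'(2) ddz] aa'(4) aa(4) by simp
    ultimately have shad: "sh L x' aa = sh L z' dd" using aa'(5) by simp
    have r1x': "r1 \<in> sh L x' am" using r1 alsx sh_mem by auto
    have r1z': "r1 \<in> sh L z' nn" using r1 z1(2) zez sh_mem unfolding ze_def by auto
    have e1: "sh L x' am = pre L r1 (sh L x' als)"
      using pre_sh[OF sh_filter[OF xf' amx] r1x'] sh_sh[OF mor1(1) r1(1) r1(2)] r1(3) by simp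
    have e2: "sh L x' als = sh L z' ze"
    proof -
      have "sh L x' als = sh L (sh L x' aa) r2" using sh_sh[OF mor1(2) r2(1) r2(2)] r2(3) by simp
      also have "\<dots> = sh L (sh L z' dd) r2" using shad by simp
      also have "\<dots> = sh L z' ze" using sh_sh[OF mor1(4) r2(1) z2(2)] ze(2) by simp
      finally show ?thesis .
    qed
    have e3: "sh L z' nn = pre L r1 (sh L z' ze)"
      using pre_sh[OF sh_filter[OF zf' nnz] r1z'] sh_sh[OF mor1(3) r1(1) z1(2)] unfolding ze_def by simp
    have "sh L x' am = sh L z' nn" using e1 e2 e3 by simp
    moreover have "q' = deg L am + - deg L nn" using aa'(6) aa(6) am(6) am(3,4) by simp
    ultimately have "wit P L x' q' z' (deg L am) (deg L nn)" using wit_I[OF x'X z'X amx nnz] by simp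
    then have "wit P L x' q' z' m n" using am(3,4) by simp
    moreover have "x' \<in> U" "z' \<in> V" using x'U z'V unfolding U'_def V'_def by auto
    ultimately show "g' \<in> Bs m n U V" using gx g'G B_iff[OF mn] by auto
  qed
  ultimately show ?thesis using oU by blast
qed

abbreviation "BSS \<equiv> {Bs m n U V | m n U V. m \<in> P \<and> n \<in> P \<and> openin (pathtop L) U \<and> openin (pathtop L) V}"

lemma TT_eq: "TT = topology_generated_by BSS"
  unfolding pathgpd_top_def ..

lemma NBL0: assumes "generate_topology_on BSS S" "(x, q, y) \<in> S" "wit P L x q y a d"
  shows "\<exists>U V. openin (pathtop L) U \<and> openin (pathtop L) V \<and> (x, q, y) \<in> Bs a d U V \<and> Bs a d U V \<subseteq> S"
  using assms
proof (induction arbitrary: x q y a d rule: generate_topology_on.induct)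
  case Empty
  then show ?case by simp
next
  case (Int S1 S2)
  obtain U1 V1 where 1: "openin (pathtop L) U1" "openin (pathtop L) V1" "(x, q, y) \<in> Bs a d U1 V1" "Bs a d U1 V1 \<subseteq> S1"
    using Int.IH(1)[of x q y a d] Int.prems by blast
  obtain U2 V2 where 2: "openin (pathtop L) U2" "openin (pathtop L) V2" "(x, q, y) \<in> Bs a d U2 V2" "Bs a d U2 V2 \<subseteq> S2"
    using Int.IH(2)[of x q y a d] Int.prems by blast
  have "(x, q, y) \<in> Bs a d (U1 \<inter> U2) (V1 \<inter> V2)" using 1(3) 2(3) unfolding gpd_basic_set_def by auto
  moreover have "Bs a d (U1 \<inter> U2) (V1 \<inter> V2) \<subseteq> S1 \<inter> S2"
    using 1(4) 2(4) B_mono[of "U1 \<inter> U2" U1 "V1 \<inter> V2" V1 a d] B_mono[of "U1 \<inter> U2" U2 "V1 \<inter> V2" V2 a d] by blast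
  moreover have "openin (pathtop L) (U1 \<inter> U2)" "openin (pathtop L) (V1 \<inter> V2)" using 1 2 by auto
  ultimately show ?case by blast
next
  case (UN K)
  then obtain k where k: "k \<in> K" "(x, q, y) \<in> k" by blast
  then obtain U V where "openin (pathtop L) U" "openin (pathtop L) V" "(x, q, y) \<in> Bs a d U V" "Bs a d U V \<subseteq> k"
    using UN.IH[OF k(1) k(2) UN.prems(2)] by blast
  then show ?case using k by blast
next
  case (Basis s)
  then obtain m n U V where s: "s = Bs m n U V" "m \<in> P" "n \<in> P" "openin (pathtop L) U" "openin (pathtop L) V" by blast
  show ?case using EQ[OF s(2,3,4,5), of x q y a d] s(1) Basis.prems by blast
qed

lemma NBL': assumes "openin TT S" "(x, q, y) \<in> S" "wit P L x q y a d"
  obtains U V where "openin (pathtop L) U" "openin (pathtop L) V" "(x, q, y) \<in> Bs a d U V" "Bs a d U V \<subseteq> S"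
proof -
  have "generate_topology_on BSS S" using assms(1) unfolding TT_eq openin_topology_generated_by_iff .
  then show ?thesis using NBL0[OF _ assms(2,3)] that by blast
qed

lemma T_open_I: assumes "\<And>x q y. (x, q, y) \<in> S \<Longrightarrow> \<exists>a d U V. a \<in> P \<and> d \<in> P \<and> openin (pathtop L) U \<and>
    openin (pathtop L) V \<and> (x, q, y) \<in> Bs a d U V \<and> Bs a d U V \<subseteq> S"
  shows "openin TT S"
proof (subst openin_subopen, intro ballI)
  fix g assume gS: "g \<in> S"
  obtain x q y where gx: "g = (x, q, y)" by (cases g) auto
  then have "(x, q, y) \<in> S" using gS by simp
  from assms[OF this] obtain a d U V where "a \<in> P" "d \<in> P" "openin (pathtop L) U" "openin (pathtop L) V"
    "(x, q, y) \<in> Bs a d U V" "Bs a d U V \<subseteq> S" by blast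
  then show "\<exists>T. openin TT T \<and> g \<in> T \<and> T \<subseteq> S" using B_open[of a d U V] gx by blast
qed

lemma cont_T:
  assumes "\<And>u. u \<in> topspace Y \<Longrightarrow> f u \<in> GG"
    and "\<And>u. u \<in> topspace Y \<Longrightarrow> \<exists>a d. wit P L (fst (f u)) (fst (snd (f u))) (snd (snd (f u))) a d \<and>
         (\<forall>U V. openin (pathtop L) U \<and> openin (pathtop L) V \<and> f u \<in> Bs a d U V \<longrightarrow>
            (\<exists>N. openin Y N \<and> u \<in> N \<and> f ` N \<subseteq> Bs a d U V))"
  shows "continuous_map Y TT f"
  unfolding continuous_map
proof (intro conjI allI impI)
  show "f ` topspace Y \<subseteq> topspace TT" using assms(1) T_space by auto
  fix S assume S: "openin TT S"
  show "openin Y {u \<in> topspace Y. f u \<in> S}"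
  proof (subst openin_subopen, intro ballI)
    fix u assume u: "u \<in> {u \<in> topspace Y. f u \<in> S}"
    obtain x q y where fu: "f u = (x, q, y)" by (cases "f u") auto
    obtain a d where ad: "wit P L x q y a d" and
      H: "\<forall>U V. openin (pathtop L) U \<and> openin (pathtop L) V \<and> f u \<in> Bs a d U V \<longrightarrow>
            (\<exists>N. openin Y N \<and> u \<in> N \<and> f ` N \<subseteq> Bs a d U V)"
      using assms(2)[of u] u fu by auto
    obtain U V where UV: "openin (pathtop L) U" "openin (pathtop L) V" "(x, q, y) \<in> Bs a d U V" "Bs a d U V \<subseteq> S"
      using NBL'[OF S _ ad] u fu by auto
    obtain N where N: "openin Y N" "u \<in> N" "f ` N \<subseteq> Bs a d U V" using H UV fu by metis
    have "N \<subseteq> {u \<in> topspace Y. f u \<in> S}" using N UV openin_subset[OF N(1)] by auto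
    then show "\<exists>T. openin Y T \<and> u \<in> T \<and> T \<subseteq> {u \<in> topspace Y. f u \<in> S}" using N by blast
  qed
qed

end

context pg begin

lemma wit_diag: "x \<in> XX \<Longrightarrow> b \<in> x \<Longrightarrow> wit P L x 0 x (deg L b) (deg L b)"
  using wit_I[of x x b b 0] by simp

lemma wit_diag0: assumes "x \<in> XX" shows "wit P L x 0 x 0 0"
proof -
  have xf: "is_filter L x" using assms pathspace_filter by auto
  obtain l where "l \<in> x" using F_ne[OF xf] by blast
  then have v: "rng L l \<in> x" "deg L (rng L l) = 0" using F_rng_in[OF xf] F_sub[OF xf] by auto
  show ?thesis using wit_diag[OF assms v(1)] v(2) by simp
qed

lemma unit_G: "x \<in> XX \<Longrightarrow> (x, 0, x) \<in> GG"
  using wit_diag0 G_iff by blast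

lemma wit_inv: "wit P L x q y a d \<Longrightarrow> wit P L y (- q) x d a"
  unfolding wit_def using gi3 by auto

lemma G_inv: "(x, q, y) \<in> GG \<Longrightarrow> (y, - q, x) \<in> GG"
  using G_iff wit_inv by blast

lemma wit_src: assumes "wit P L x q y a d" "y \<in> XX" shows "wit P L y 0 y d d"
proof -
  obtain b where "b \<in> y" "deg L b = d" using assms in_dom_ex unfolding wit_def by blast
  then show ?thesis using wit_diag[OF assms(2)] by auto
qed

lemma wit_mult: "wit P L x q y a t \<Longrightarrow> wit P L y r z t d \<Longrightarrow> wit P L x (q + r) z a d"
  unfolding wit_def using gi4 by auto

lemma WEXT: assumes w: "wit P L x q y a b" and xy: "x \<in> XX" "y \<in> XX" and bb: "bb \<in> y" "deg L bb = b"
  and pb: "prec L bb bb'" and bb': "bb' \<in> y"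
  shows "\<exists>a'. wit P L x q y a' (deg L bb')"
proof -
  have xf: "is_filter L x" and yf: "is_filter L y" using xy pathspace_filter by auto
  obtain al be where ab: "al \<in> x" "be \<in> y" "deg L al = a" "deg L be = b" "sh L x al = sh L y be" "q = a + - b"
    using wit_E[OF w xy] by blast
  have "be = bb" using F_deg_uniq[OF yf ab(2) bb(1)] ab(4) bb(2) by simp
  then have sh1: "sh L x al = sh L y bb" using ab(5) by simp
  obtain r where r: "r \<in> mor L" "src L bb = rng L r" "bb' = comp L bb r" using pb prec_iff by auto
  have bbm: "bb \<in> mor L" "al \<in> mor L" using bb ab xf yf F_sub by blast+
  have ry: "r \<in> sh L y bb" using r bb' sh_mem by auto
  then have rx: "r \<in> sh L x al" using sh1 by simp
  then have alr: "comp L al r \<in> x" "src L al = rng L r" using sh_mem by auto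
  have "sh L x (comp L al r) = sh L (sh L x al) r" using sh_sh[OF bbm(2) r(1) alr(2)] by simp
  also have "\<dots> = sh L (sh L y bb) r" using sh1 by simp
  also have "\<dots> = sh L y bb'" using sh_sh[OF bbm(1) r(1) r(2)] r(3) by simp
  finally have e: "sh L x (comp L al r) = sh L y bb'" .
  have "deg L (comp L al r) = a + deg L r" using deg_comp[OF bbm(2) r(1) alr(2)] ab(3) by simp
  moreover have "deg L bb' = b + deg L r" using deg_comp[OF bbm(1) r(1) r(2)] r(3) bb(2) by simp
  ultimately have "q = deg L (comp L al r) + - deg L bb'" using ab(6) gi2 by metis
  then show ?thesis using wit_I[OF xy alr(1) bb' e] by blast
qed

lemma WEXT_L: assumes w: "wit P L x q y a b" and xy: "x \<in> XX" "y \<in> XX" and aa: "aa \<in> x" "deg L aa = a"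
  and pa: "prec L aa aa'" and aa': "aa' \<in> x"
  shows "\<exists>b'. wit P L x q y (deg L aa') b'"
proof -
  obtain b' where "wit P L y (- q) x b' (deg L aa')"
    using WEXT[OF wit_inv[OF w] xy(2,1) aa pa aa'] by blast
  then show ?thesis using wit_inv by fastforce
qed

lemma G_mult: assumes g: "(x, q, y) \<in> GG" and h: "(y, r, z) \<in> GG"
  shows "\<exists>a t d. wit P L x q y a t \<and> wit P L y r z t d"
proof -
  have xX: "x \<in> XX" "y \<in> XX" "z \<in> XX" using g h G_iff by auto
  have yf: "is_filter L y" using xX pathspace_filter by auto
  obtain a b where w1: "wit P L x q y a b" using g G_iff by auto
  obtain c d where w2: "wit P L y r z c d" using h G_iff by auto
  obtain be where be: "be \<in> y" "deg L be = b" using w1 in_dom_ex unfolding wit_def by blast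
  obtain ga where ga: "ga \<in> y" "deg L ga = c" using w2 in_dom_ex unfolding wit_def by blast
  have m: "be \<in> mor L" "ga \<in> mor L" using be ga yf F_sub by auto
  obtain n0 where n0: "n0 \<in> y" "prec L be n0" "prec L ga n0" using F_dir[OF yf be(1) ga(1)] by blast
  have n0m: "n0 \<in> mor L" using n0 prec_mor by auto
  obtain t where t: "t \<in> P" "wqlo_le P b t" "wqlo_le P c t"
     "\<forall>r\<in>P. wqlo_le P b r \<and> wqlo_le P c r \<longrightarrow> wqlo_le P t r"
    using lub[of b c "deg L n0"] prec_deg[OF n0(2)] prec_deg[OF n0(3)] be ga m n0m deg_P by auto
  obtain bt where bt: "bt \<in> y" "deg L bt = t" "prec L be bt" "prec L ga bt"
    using F_lub[OF yf be(1) ga(1), of t] t be(2) ga(2) by auto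
  obtain a' where "wit P L x q y a' (deg L bt)" using WEXT[OF w1 xX(1,2) be bt(3) bt(1)] by blast
  moreover obtain d' where "wit P L y r z (deg L bt) d'" using WEXT_L[OF w2 xX(2,3) ga bt(4) bt(1)] by blast
  ultimately show ?thesis by blast
qed

lemma cont_inv: "continuous_map TT TT tg_inv"
proof (rule cont_T)
  fix u assume u: "u \<in> topspace TT"
  obtain x q y where ux: "u = (x, q, y)" by (cases u) auto
  then have uG: "(x, q, y) \<in> GG" using u T_space by simp
  then show "tg_inv u \<in> GG" using ux G_inv unfolding tg_inv_def by simp
  obtain a d where w: "wit P L x q y a d" using uG G_iff by auto
  have ad: "a \<in> P" "d \<in> P" using wit_P[OF w] by auto
  show "\<exists>a d. wit P L (fst (tg_inv u)) (fst (snd (tg_inv u))) (snd (snd (tg_inv u))) a d \<and>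
         (\<forall>U V. openin (pathtop L) U \<and> openin (pathtop L) V \<and> tg_inv u \<in> Bs a d U V \<longrightarrow>
            (\<exists>N. openin TT N \<and> u \<in> N \<and> tg_inv ` N \<subseteq> Bs a d U V))"
  proof (intro exI conjI allI impI)
    show "wit P L (fst (tg_inv u)) (fst (snd (tg_inv u))) (snd (snd (tg_inv u))) d a"
      using wit_inv[OF w] ux unfolding tg_inv_def by simp
    fix U V assume UV: "openin (pathtop L) U \<and> openin (pathtop L) V \<and> tg_inv u \<in> Bs d a U V"
    then have yU: "y \<in> U" "x \<in> V" using ux B_iff[OF ad(2,1)] unfolding tg_inv_def by auto
    show "openin TT (Bs a d V U)" using B_open ad UV by auto
    show "u \<in> Bs a d V U" using ux uG w yU B_iff[OF ad] by auto
    show "tg_inv ` Bs a d V U \<subseteq> Bs d a U V"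
    proof
      fix v assume "v \<in> tg_inv ` Bs a d V U"
      then obtain x' q' y' where v: "v = (y', - q', x')" "(x', q', y') \<in> Bs a d V U"
        unfolding tg_inv_def by auto
      then show "v \<in> Bs d a U V" using B_iff[OF ad] B_iff[OF ad(2,1)] wit_inv G_inv by auto
    qed
  qed
qed

lemma cont_src: "continuous_map TT TT tg_src"
proof (rule cont_T)
  fix u assume u: "u \<in> topspace TT"
  obtain x q y where ux: "u = (x, q, y)" by (cases u) auto
  then have uG: "(x, q, y) \<in> GG" using u T_space by simp
  then have yX: "y \<in> XX" using G_iff by auto
  then show "tg_src u \<in> GG" using ux unit_G unfolding tg_src_def by simp
  obtain a d where w: "wit P L x q y a d" using uG G_iff by auto
  have ad: "a \<in> P" "d \<in> P" using wit_P[OF w] by auto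
  show "\<exists>a d. wit P L (fst (tg_src u)) (fst (snd (tg_src u))) (snd (snd (tg_src u))) a d \<and>
         (\<forall>U V. openin (pathtop L) U \<and> openin (pathtop L) V \<and> tg_src u \<in> Bs a d U V \<longrightarrow>
            (\<exists>N. openin TT N \<and> u \<in> N \<and> tg_src ` N \<subseteq> Bs a d U V))"
  proof (intro exI conjI allI impI)
    show "wit P L (fst (tg_src u)) (fst (snd (tg_src u))) (snd (snd (tg_src u))) d d"
      using wit_src[OF w yX] ux unfolding tg_src_def by simp
    fix U V assume UV: "openin (pathtop L) U \<and> openin (pathtop L) V \<and> tg_src u \<in> Bs d d U V"
    then have yU: "y \<in> U" "y \<in> V" using ux B_iff[OF ad(2,2)] unfolding tg_src_def by auto
    show "openin TT (Bs a d XX (U \<inter> V))" using B_open[OF ad XX_open openin_Int] UV by auto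
    show "u \<in> Bs a d XX (U \<inter> V)" using ux uG w yU B_iff[OF ad] G_iff by auto
    show "tg_src ` Bs a d XX (U \<inter> V) \<subseteq> Bs d d U V"
    proof
      fix v assume "v \<in> tg_src ` Bs a d XX (U \<inter> V)"
      then obtain x' q' y' where v: "v = (y', 0, y')" "(x', q', y') \<in> Bs a d XX (U \<inter> V)"
        unfolding tg_src_def by auto
      then have "(x', q', y') \<in> GG" "wit P L x' q' y' a d" "y' \<in> U" "y' \<in> V" using B_iff[OF ad] by auto
      moreover then have "y' \<in> XX" using G_iff by auto
      ultimately show "v \<in> Bs d d U V" using v(1) B_iff[OF ad(2,2)] wit_src unit_G by auto
    qed
  qed
qed

lemma cont_fst: "continuous_map TT (pathtop L) fst"
  unfolding continuous_map
proof (intro conjI allI impI)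
  show "fst ` topspace TT \<subseteq> topspace (pathtop L)" using T_space G_iff by auto
  fix Ob assume Ob: "openin (pathtop L) Ob"
  show "openin TT {x \<in> topspace TT. fst x \<in> Ob}"
  proof (rule T_open_I)
    fix x q y assume h: "(x, q, y) \<in> {x \<in> topspace TT. fst x \<in> Ob}"
    then have G: "(x, q, y) \<in> GG" "x \<in> Ob" using T_space by auto
    then obtain a d where w: "wit P L x q y a d" using G_iff by auto
    have ad: "a \<in> P" "d \<in> P" using wit_P[OF w] by auto
    have "(x, q, y) \<in> Bs a d Ob XX" using B_iff[OF ad] G w G_iff by auto
    moreover have "Bs a d Ob XX \<subseteq> {x \<in> topspace TT. fst x \<in> Ob}" using B_iff[OF ad] T_space by auto
    ultimately show "\<exists>a d U V. a \<in> P \<and> d \<in> P \<and> openin (pathtop L) U \<and>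
      openin (pathtop L) V \<and> (x, q, y) \<in> Bs a d U V \<and> Bs a d U V \<subseteq> {x \<in> topspace TT. fst x \<in> Ob}"
      using ad Ob XX_open by blast
  qed
qed

lemma cont_snd: "continuous_map TT (pathtop L) (\<lambda>g. snd (snd g))"
  unfolding continuous_map
proof (intro conjI allI impI)
  show "(\<lambda>g. snd (snd g)) ` topspace TT \<subseteq> topspace (pathtop L)" using T_space G_iff by auto
  fix Ob assume Ob: "openin (pathtop L) Ob"
  show "openin TT {x \<in> topspace TT. snd (snd x) \<in> Ob}"
  proof (rule T_open_I)
    fix x q y assume h: "(x, q, y) \<in> {x \<in> topspace TT. snd (snd x) \<in> Ob}"
    then have G: "(x, q, y) \<in> GG" "y \<in> Ob" using T_space by auto
    then obtain a d where w: "wit P L x q y a d" using G_iff by auto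
    have ad: "a \<in> P" "d \<in> P" using wit_P[OF w] by auto
    have "(x, q, y) \<in> Bs a d XX Ob" using B_iff[OF ad] G w G_iff by auto
    moreover have "Bs a d XX Ob \<subseteq> {x \<in> topspace TT. snd (snd x) \<in> Ob}" using B_iff[OF ad] T_space by auto
    ultimately show "\<exists>a d U V. a \<in> P \<and> d \<in> P \<and> openin (pathtop L) U \<and>
      openin (pathtop L) V \<and> (x, q, y) \<in> Bs a d U V \<and> Bs a d U V \<subseteq> {x \<in> topspace TT. snd (snd x) \<in> Ob}"
      using ad Ob XX_open by blast
  qed
qed

lemma cont_e: "continuous_map (pathtop L) TT (\<lambda>x. (x, 0::'q, x))"
proof (rule cont_T)
  fix u assume u: "u \<in> topspace (pathtop L)"
  then have uX: "u \<in> XX" by simp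
  then show "(u, 0, u) \<in> GG" using unit_G by auto
  have P00: "0 \<in> P" using P0 .
  show "\<exists>a d. wit P L (fst (u, 0, u)) (fst (snd (u, 0, u))) (snd (snd (u, 0, u))) a d \<and>
         (\<forall>U V. openin (pathtop L) U \<and> openin (pathtop L) V \<and> (u, 0, u) \<in> Bs a d U V \<longrightarrow>
            (\<exists>N. openin (pathtop L) N \<and> u \<in> N \<and> (\<lambda>x. (x, 0::'q, x)) ` N \<subseteq> Bs a d U V))"
  proof (intro exI conjI allI impI)
    show "wit P L (fst (u, 0, u)) (fst (snd (u, 0, u))) (snd (snd (u, 0, u))) 0 0"
      using wit_diag0[OF uX] by simp
    fix U V assume UV: "openin (pathtop L) U \<and> openin (pathtop L) V \<and> (u, 0, u) \<in> Bs 0 0 U V"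
    then have yU: "u \<in> U" "u \<in> V" using B_iff[OF P00 P00] by auto
    show "openin (pathtop L) (U \<inter> V)" using UV by auto
    show "u \<in> U \<inter> V" using yU by auto
    show "(\<lambda>x. (x, 0::'q, x)) ` (U \<inter> V) \<subseteq> Bs 0 0 U V"
    proof
      fix v assume "v \<in> (\<lambda>x. (x, 0::'q, x)) ` (U \<inter> V)"
      then obtain x' where v: "v = (x', 0::'q, x')" "x' \<in> U" "x' \<in> V" by auto
      then have "x' \<in> XX" using UV openin_subset by fastforce
      then show "v \<in> Bs 0 0 U V" using v B_iff[OF P00 P00] wit_diag0 unit_G by auto
    qed
  qed
qed

lemma composable_T: "tg_composable TT = {(g, h). g \<in> GG \<and> h \<in> GG \<and> snd (snd g) = fst h}"
  unfolding tg_composable_def T_space ..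

lemma cont_mult: "continuous_map (subtopology (prod_topology TT TT) (tg_composable TT)) TT tg_mult"
proof (rule cont_T)
  let ?Y = "subtopology (prod_topology TT TT) (tg_composable TT)"
  fix u assume u: "u \<in> topspace ?Y"
  obtain x q y y' r z where ux: "u = ((x, q, y), (y', r, z))" by (cases u) auto
  have uG: "(x, q, y) \<in> GG" "(y, r, z) \<in> GG" "y' = y" using u ux T_space composable_T by auto
  obtain a t d where w: "wit P L x q y a t" "wit P L y r z t d" using G_mult[OF uG(1,2)] by blast
  have w3: "wit P L x (q + r) z a d" using wit_mult[OF w] .
  have XX3: "x \<in> XX" "z \<in> XX" using uG G_iff by auto
  have mG: "tg_mult u = (x, q + r, z)" using ux unfolding tg_mult_def by simp
  then show "tg_mult u \<in> GG" using G_iff w3 XX3 by auto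
  have ad: "a \<in> P" "d \<in> P" "t \<in> P" using wit_P[OF w(1)] wit_P[OF w(2)] by auto
  show "\<exists>a d. wit P L (fst (tg_mult u)) (fst (snd (tg_mult u))) (snd (snd (tg_mult u))) a d \<and>
         (\<forall>U V. openin (pathtop L) U \<and> openin (pathtop L) V \<and> tg_mult u \<in> Bs a d U V \<longrightarrow>
            (\<exists>N. openin ?Y N \<and> u \<in> N \<and> tg_mult ` N \<subseteq> Bs a d U V))"
  proof (intro exI conjI allI impI)
    show "wit P L (fst (tg_mult u)) (fst (snd (tg_mult u))) (snd (snd (tg_mult u))) a d"
      using w3 mG by simp
    fix U V assume UV: "openin (pathtop L) U \<and> openin (pathtop L) V \<and> tg_mult u \<in> Bs a d U V"
    then have xU: "x \<in> U" "z \<in> V" using mG B_iff[OF ad(1,2)] by auto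
    let ?N = "(Bs a t U XX \<times> Bs t d XX V) \<inter> tg_composable TT"
    have "openin (prod_topology TT TT) (Bs a t U XX \<times> Bs t d XX V)"
      unfolding openin_prod_Times_iff using B_open ad UV XX_open by auto
    then show "openin ?Y ?N" by (rule openin_subtopology_Int)
    show "u \<in> ?N" using ux uG w xU XX3 B_iff[OF ad(1,3)] B_iff[OF ad(3,2)] G_iff composable_T by auto
    show "tg_mult ` ?N \<subseteq> Bs a d U V"
    proof
      fix v assume "v \<in> tg_mult ` ?N"
      then obtain g h where gh: "v = tg_mult (g, h)" "g \<in> Bs a t U XX" "h \<in> Bs t d XX V" "snd (snd g) = fst h"
        unfolding composable_T by auto
      obtain x1 q1 y1 where g: "g = (x1, q1, y1)" by (cases g) auto
      obtain y2 r2 z2 where h: "h = (y2, r2, z2)" by (cases h) auto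
      have "(x1, q1, y1) \<in> GG" "wit P L x1 q1 y1 a t" "x1 \<in> U" using gh g B_iff[OF ad(1,3)] by auto
      moreover have "(y2, r2, z2) \<in> GG" "wit P L y2 r2 z2 t d" "z2 \<in> V" using gh h B_iff[OF ad(3,2)] by auto
      moreover have "y1 = y2" using gh g h by simp
      ultimately have W: "wit P L x1 (q1 + r2) z2 a d" "x1 \<in> U" "z2 \<in> V" "x1 \<in> XX" "z2 \<in> XX"
        using wit_mult G_iff by auto
      have "v = (x1, q1 + r2, z2)" using gh(1) g h unfolding tg_mult_def by simp
      moreover have "(x1, q1 + r2, z2) \<in> GG" using W G_iff by blast
      ultimately show "v \<in> Bs a d U V" using W B_iff[OF ad(1,2)] by simp
    qed
  qed
qed

lemma T_Hausdorff: "Hausdorff_space TT"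
  unfolding Hausdorff_space_def T_space
proof (intro allI impI)
  fix g g' assume h: "g \<in> GG \<and> g' \<in> GG \<and> g \<noteq> g'"
  obtain x q y where gx: "g = (x, q, y)" by (cases g) auto
  obtain x' q' y' where gx': "g' = (x', q', y')" by (cases g') auto
  obtain a d where w: "wit P L x q y a d" using h gx G_iff by auto
  obtain a' d' where w': "wit P L x' q' y' a' d'" using h gx' G_iff by auto
  have ad: "a \<in> P" "d \<in> P" "a' \<in> P" "d' \<in> P" using wit_P[OF w] wit_P[OF w'] by auto
  have X: "x \<in> XX" "y \<in> XX" "x' \<in> XX" "y' \<in> XX" using h gx gx' G_iff by auto
  have gB: "g \<in> Bs a d XX XX" "g' \<in> Bs a' d' XX XX" using h gx gx' w w' X B_iff[OF ad(1,2)] B_iff[OF ad(3,4)] by auto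
  show "\<exists>U V. openin TT U \<and> openin TT V \<and> g \<in> U \<and> g' \<in> V \<and> disjnt U V"
  proof (cases "x = x'")
    case False
    then obtain U U' where UU: "openin (pathtop L) U" "openin (pathtop L) U'" "x \<in> U" "x' \<in> U'" "disjnt U U'"
      using pathtop_Hausdorff X unfolding Hausdorff_space_def by (metis pathtop_space)
    have "openin TT (Bs a d U XX)" "openin TT (Bs a' d' U' XX)" using B_open ad UU XX_open by auto
    moreover have "g \<in> Bs a d U XX" "g' \<in> Bs a' d' U' XX" using gB UU B_iff[OF ad(1,2)] B_iff[OF ad(3,4)] gx gx' by auto
    moreover have "disjnt (Bs a d U XX) (Bs a' d' U' XX)" using UU(5) unfolding disjnt_def gpd_basic_set_def by auto
    ultimately show ?thesis by blast
  next
    case xx: True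
    show ?thesis
    proof (cases "y = y'")
      case False
      then obtain V V' where VV: "openin (pathtop L) V" "openin (pathtop L) V'" "y \<in> V" "y' \<in> V'" "disjnt V V'"
        using pathtop_Hausdorff X unfolding Hausdorff_space_def by (metis pathtop_space)
      have "openin TT (Bs a d XX V)" "openin TT (Bs a' d' XX V')" using B_open ad VV XX_open by auto
      moreover have "g \<in> Bs a d XX V" "g' \<in> Bs a' d' XX V'" using gB VV B_iff[OF ad(1,2)] B_iff[OF ad(3,4)] gx gx' by auto
      moreover have "disjnt (Bs a d XX V) (Bs a' d' XX V')" using VV(5) unfolding disjnt_def gpd_basic_set_def by auto
      ultimately show ?thesis by blast
    next
      case True
      then have "q \<noteq> q'" using h gx gx' xx by auto
      then have "a + - d \<noteq> a' + - d'" using w w' unfolding wit_def by auto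
      then have "disjnt (Bs a d XX XX) (Bs a' d' XX XX)" unfolding disjnt_def gpd_basic_set_def by auto
      moreover have "openin TT (Bs a d XX XX)" "openin TT (Bs a' d' XX XX)" using B_open ad XX_open by auto
      ultimately show ?thesis using gB by blast
    qed
  qed
qed

lemma T_second_countable: "second_countable TT"
proof -
  obtain BX where BX: "countable BX" "\<forall>V\<in>BX. openin (pathtop L) V"
    "\<forall>U x. openin (pathtop L) U \<and> x \<in> U \<longrightarrow> (\<exists>V\<in>BX. x \<in> V \<and> V \<subseteq> U)"
    using pathtop_second_countable unfolding second_countable_def by blast
  let ?D = "deg L ` mor L"
  let ?B = "(\<lambda>(a, d, U, V). Bs a d U V) ` (?D \<times> ?D \<times> BX \<times> BX)"
  show ?thesis unfolding second_countable_def
  proof (intro exI conjI)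
    show "countable ?B" using BX(1) countable_mor by auto
    show "\<forall>V\<in>?B. openin TT V" using BX(2) B_open deg_P by auto
    show "\<forall>S g. openin TT S \<and> g \<in> S \<longrightarrow> (\<exists>V\<in>?B. g \<in> V \<and> V \<subseteq> S)"
    proof (intro allI impI)
      fix S g assume Sg: "openin TT S \<and> g \<in> S"
      obtain x q y where gx: "g = (x, q, y)" by (cases g) auto
      have gG: "(x, q, y) \<in> GG" using Sg gx openin_subset T_space by fastforce
      then obtain a d where w: "wit P L x q y a d" using G_iff by auto
      have X: "x \<in> XX" "y \<in> XX" using gG G_iff by auto
      obtain al be where ab: "al \<in> x" "be \<in> y" "deg L al = a" "deg L be = d"
        using wit_E[OF w X] by blast
      have aD: "a \<in> ?D" "d \<in> ?D" using ab X pathspace_filter F_sub by blast+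
      have ad: "a \<in> P" "d \<in> P" using wit_P[OF w] by auto
      obtain U V where UV: "openin (pathtop L) U" "openin (pathtop L) V" "(x, q, y) \<in> Bs a d U V" "Bs a d U V \<subseteq> S"
        using NBL'[OF conjunct1[OF Sg] _ w] Sg gx by blast
      have xU: "x \<in> U" "y \<in> V" using UV B_iff[OF ad] by auto
      obtain U0 where U0: "U0 \<in> BX" "x \<in> U0" "U0 \<subseteq> U" using BX(3) UV(1) xU(1) by blast
      obtain V0 where V0: "V0 \<in> BX" "y \<in> V0" "V0 \<subseteq> V" using BX(3) UV(2) xU(2) by blast
      have Bin: "Bs a d U0 V0 \<in> ?B" using aD U0 V0 by (intro rev_image_eqI[of "(a, d, U0, V0)"]) auto
      have "g \<in> Bs a d U0 V0" using UV(3) gx U0 V0 B_iff[OF ad] by auto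
      moreover have "Bs a d U0 V0 \<subseteq> S" using B_mono[OF U0(3) V0(3)] UV(4) by blast
      ultimately have "g \<in> Bs a d U0 V0 \<and> Bs a d U0 V0 \<subseteq> S" by blast
      with Bin show "\<exists>V\<in>?B. g \<in> V \<and> V \<subseteq> S" by (rule bexI[rotated])
    qed
  qed
qed

end

context pg begin

lemma EXT: assumes xf: "is_filter L x" and yf: "is_filter L y" and al: "al \<in> x" and be: "be \<in> y"
  and e: "sh L x al = sh L y be" and r: "r \<in> sh L x al"
  shows "comp L al r \<in> x" "comp L be r \<in> y" "sh L x (comp L al r) = sh L y (comp L be r)"
    "prec L al (comp L al r)" "prec L be (comp L be r)"
    "deg L (comp L al r) + - deg L (comp L be r) = deg L al + - deg L be"
proof -
  have m: "al \<in> mor L" "be \<in> mor L" using al be xf yf F_sub by blast+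
  have r1: "r \<in> mor L" "src L al = rng L r" "comp L al r \<in> x" using r sh_mem by auto
  have r2: "src L be = rng L r" "comp L be r \<in> y" using r e sh_mem by auto
  show "comp L al r \<in> x" "comp L be r \<in> y" using r1 r2 by auto
  have "sh L x (comp L al r) = sh L (sh L x al) r" using sh_sh[OF m(1) r1(1) r1(2)] by simp
  also have "\<dots> = sh L (sh L y be) r" using e by simp
  also have "\<dots> = sh L y (comp L be r)" using sh_sh[OF m(2) r1(1) r2(1)] by simp
  finally show "sh L x (comp L al r) = sh L y (comp L be r)" .
  show "prec L al (comp L al r)" "prec L be (comp L be r)" using prec_comp m r1 r2 by auto
  show "deg L (comp L al r) + - deg L (comp L be r) = deg L al + - deg L be"
    using deg_comp m r1 r2 gi2 by simp
qed

lemma wit_FA: assumes g: "(x, q, y) \<in> GG"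
  obtains al be where "al \<in> x" "be \<in> y" "al \<in> FA L" "be \<in> FA L" "sh L x al = sh L y be"
    "q = deg L al + - deg L be"
proof -
  have X: "x \<in> XX" "y \<in> XX" using g G_iff by auto
  have xf: "is_filter L x" and yf: "is_filter L y" using X pathspace_filter by auto
  obtain a b where w: "wit P L x q y a b" using g G_iff by auto
  obtain al0 be0 where ab: "al0 \<in> x" "be0 \<in> y" "deg L al0 = a" "deg L be0 = b" "sh L x al0 = sh L y be0" "q = a + - b"
    using wit_E[OF w X] by blast
  have m: "al0 \<in> mor L" "be0 \<in> mor L" using ab xf yf F_sub by blast+
  obtain ph where ph: "ph \<in> x" "ph \<in> FA L" using pathspace_FA X by blast
  obtain xi where xi: "xi \<in> x" "prec L al0 xi" "prec L ph xi" using F_dir[OF xf ab(1) ph(1)] by blast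
  obtain ps where ps: "ps \<in> y" "ps \<in> FA L" using pathspace_FA X by blast
  obtain et where et: "et \<in> y" "prec L be0 et" "prec L ps et" using F_dir[OF yf ab(2) ps(1)] by blast
  obtain r1 where r1: "r1 \<in> mor L" "src L al0 = rng L r1" "xi = comp L al0 r1" using xi(2) prec_iff by auto
  obtain r2 where r2: "r2 \<in> mor L" "src L be0 = rng L r2" "et = comp L be0 r2" using et(2) prec_iff by auto
  have r1s: "r1 \<in> sh L x al0" using r1 xi sh_mem by auto
  have r2s: "r2 \<in> sh L x al0" using r2 et sh_mem ab(5) by auto
  have wf: "is_filter L (sh L x al0)" using sh_filter xf ab(1) by auto
  obtain ch where ch: "ch \<in> sh L x al0" "prec L r1 ch" "prec L r2 ch" using F_dir[OF wf r1s r2s] by blast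
  note E = EXT[OF xf yf ab(1) ab(2) ab(5) ch(1)]
  have chm: "src L al0 = rng L ch" "src L be0 = rng L ch" using ch(1) ab(5) sh_mem by auto
  have "prec L xi (comp L al0 ch)" using prec_comp_mono[OF m(1) r1(2) ch(2)] r1(3) by simp
  then have fa1: "comp L al0 ch \<in> FA L" using FA_ext[OF FA_ext[OF ph(2) xi(3)]] by blast
  have "prec L et (comp L be0 ch)" using prec_comp_mono[OF m(2) r2(2) ch(3)] r2(3) by simp
  then have fa2: "comp L be0 ch \<in> FA L" using FA_ext[OF FA_ext[OF ps(2) et(3)]] by blast
  show ?thesis using that[OF E(1) E(2) fa1 fa2 E(3)] E(6) ab by simp
qed

definition "phi al be y = pre L al (sh L y be)"

lemma src_eq: assumes "is_filter L x" "is_filter L y" "al \<in> x" "be \<in> y" "sh L x al = sh L y be"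
  shows "src L al = src L be"
proof -
  have "src L al \<in> sh L y be" using src_in_sh assms by metis
  then have "rng L (src L al) = src L be" using sh_rng by metis
  then show ?thesis using assms F_sub by (metis rng_src subsetD)
qed

lemma phi_in: assumes y: "y \<in> XX" "be \<in> y" and al: "al \<in> FA L" and s: "src L al = src L be"
  shows "phi al be y \<in> XX" "al \<in> phi al be y" "sh L (phi al be y) al = sh L y be"
proof -
  have yf: "is_filter L y" using y pathspace_filter by auto
  have alm: "al \<in> mor L" using al unfolding FA_def by auto
  have f: "is_filter L (sh L y be)" "src L al \<in> sh L y be" using sh_filter src_in_sh yf y s by auto
  show "al \<in> phi al be y" unfolding phi_def using pre_filter(2)[OF f(1) alm f(2)] .
  then show "phi al be y \<in> XX" using pathspace_I[OF _ _ al] pre_filter(1)[OF f(1) alm f(2)] unfolding phi_def by blast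
  show "sh L (phi al be y) al = sh L y be" unfolding phi_def using sh_pre[OF f(1) alm f(2)] .
qed

lemma phi_wit: assumes y: "y \<in> XX" "be \<in> y" and al: "al \<in> FA L" and s: "src L al = src L be"
  and q: "q = deg L al + - deg L be"
  shows "wit P L (phi al be y) q y (deg L al) (deg L be)" "(phi al be y, q, y) \<in> GG"
proof -
  show w: "wit P L (phi al be y) q y (deg L al) (deg L be)"
    using wit_I[OF phi_in(1)[OF y al s] y(1) phi_in(2)[OF y al s] y(2) phi_in(3)[OF y al s] q] .
  show "(phi al be y, q, y) \<in> GG" using G_iff w phi_in(1)[OF y al s] y by blast
qed

lemma phi_eq: assumes g: "(x', q', y') \<in> GG" and w: "wit P L x' q' y' (deg L al) (deg L be)"
  and al: "al \<in> x'" and be: "be \<in> y'"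
  shows "x' = phi al be y'"
proof -
  have X: "x' \<in> XX" "y' \<in> XX" using g G_iff by auto
  have xf: "is_filter L x'" and yf: "is_filter L y'" using X pathspace_filter by auto
  obtain a1 b1 where ab: "a1 \<in> x'" "b1 \<in> y'" "deg L a1 = deg L al" "deg L b1 = deg L be" "sh L x' a1 = sh L y' b1"
    "q' = deg L al + - deg L be"
    by (rule wit_E[OF w X])
  have "a1 = al" "b1 = be" using F_deg_uniq xf yf ab al be by blast+
  then have "sh L x' al = sh L y' be" using ab by simp
  then show ?thesis using pre_sh[OF xf al] unfolding phi_def by simp
qed

lemma phi_cont: assumes al: "al \<in> FA L" and bem: "be \<in> mor L" and s: "src L al = src L be"
  shows "continuous_map (subtopology (pathtop L) {y \<in> XX. be \<in> y}) (pathtop L) (phi al be)"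
proof (rule cont_pathtop)
  let ?Z = "{y \<in> XX. be \<in> y}"
  let ?Y = "subtopology (pathtop L) ?Z"
  have topY: "topspace ?Y = ?Z" by auto
  have alm: "al \<in> mor L" using al unfolding FA_def by auto
  show "\<And>y. y \<in> topspace ?Y \<Longrightarrow> phi al be y \<in> XX" using phi_in(1)[OF _ _ al s] topY by auto
  fix mu assume mu: "mu \<in> mor L"
  obtain J where J: "finite J" "J \<subseteq> mor L" "\<And>k. prec L al k \<and> prec L mu k \<longleftrightarrow> (\<exists>j\<in>J. prec L j k)"
    using FA_J[OF al prec_refl[OF alm] mu] by blast
  have "\<forall>j\<in>J. \<exists>j'. j' \<in> mor L \<and> src L al = rng L j' \<and> j = comp L al j'"
  proof
    fix j assume j: "j \<in> J"
    then have "prec L al j" using J(3)[of j] prec_refl J(2) by blast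
    then show "\<exists>j'. j' \<in> mor L \<and> src L al = rng L j' \<and> j = comp L al j'" using prec_iff by auto
  qed
  then obtain f where f: "\<And>j. j \<in> J \<Longrightarrow> f j \<in> mor L \<and> src L al = rng L (f j) \<and> j = comp L al (f j)"
    by metis
  have pmu: "\<And>j. j \<in> J \<Longrightarrow> prec L mu j" using J(3) prec_refl J(2) by blast
  let ?G = "(\<lambda>j. comp L be (f j)) ` J"
  have Gm: "?G \<subseteq> mor L" using f bem s by auto
  have key: "\<And>y. y \<in> ?Z \<Longrightarrow> mu \<in> phi al be y \<longleftrightarrow> (\<exists>j\<in>J. comp L be (f j) \<in> y)"
  proof -
    fix y assume y: "y \<in> ?Z"
    then have yf: "is_filter L y" using pathspace_filter by auto
    show "mu \<in> phi al be y \<longleftrightarrow> (\<exists>j\<in>J. comp L be (f j) \<in> y)"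
    proof
      assume "mu \<in> phi al be y"
      then obtain n where n: "n \<in> sh L y be" "n \<in> mor L" "src L al = rng L n" "prec L mu (comp L al n)"
        unfolding phi_def pre_def by auto
      have "prec L al (comp L al n)" using prec_comp alm n by auto
      then obtain j where j: "j \<in> J" "prec L j (comp L al n)" using J(3) n(4) by blast
      then have "prec L (f j) n" using prec_cancel[of al "f j" n] f[OF j(1)] alm n by auto
      then have "f j \<in> sh L y be" using F_her[OF sh_filter[OF yf] n(1)] y by auto
      then show "\<exists>j\<in>J. comp L be (f j) \<in> y" using j sh_mem by auto
    next
      assume "\<exists>j\<in>J. comp L be (f j) \<in> y"
      then obtain j where j: "j \<in> J" "comp L be (f j) \<in> y" by blast
      have "f j \<in> sh L y be" using j f[OF j(1)] s sh_mem by auto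
      moreover have "prec L mu (comp L al (f j))" using pmu[OF j(1)] f[OF j(1)] by simp
      ultimately show "mu \<in> phi al be y" unfolding phi_def pre_def using f[OF j(1)] by auto
    qed
  qed
  have e1: "{y \<in> topspace ?Y. mu \<in> phi al be y} = ?Z \<inter> (\<Union>j\<in>J. {y \<in> XX. comp L be (f j) \<in> y})"
    using key topY by auto
  have "openin (pathtop L) (\<Union>j\<in>J. {y \<in> XX. comp L be (f j) \<in> y})"
    using Gm by (intro openin_Union) (auto intro!: Z_open)
  then show "openin ?Y {y \<in> topspace ?Y. mu \<in> phi al be y}"
    unfolding e1 by (rule openin_subtopology_Int2)
  have e2: "{y \<in> topspace ?Y. mu \<notin> phi al be y} = ?Z \<inter> (NB (mor L) {} ?G \<inter> XX)"
  proof (rule set_eqI)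
    fix y
    show "y \<in> {y \<in> topspace ?Y. mu \<notin> phi al be y} \<longleftrightarrow> y \<in> ?Z \<inter> (NB (mor L) {} ?G \<inter> XX)"
    proof (cases "y \<in> ?Z")
      case True
      then have "y \<subseteq> mor L" using pathspace_sub by auto
      then have "y \<in> NB (mor L) {} ?G \<longleftrightarrow> \<not> (\<exists>j\<in>J. comp L be (f j) \<in> y)" unfolding NB_def by blast
      then show ?thesis using True key[OF True] topY by blast
    next
      case False
      then show ?thesis using topY by blast
    qed
  qed
  have "openin (pathtop L) (NB (mor L) {} ?G \<inter> XX)" using NB_open_path J(1) Gm by auto
  then show "openin ?Y {y \<in> topspace ?Y. mu \<notin> phi al be y}"
    unfolding e2 by (rule openin_subtopology_Int2)
qed

lemma bdry_sub: "bdryspace L \<subseteq> XX"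
  unfolding bdryspace_def using closure_of_subset_topspace pathtop_space by metis

lemma bdry_closed: "closedin (pathtop L) (bdryspace L)"
  unfolding bdryspace_def by simp

lemma bdry_inv: assumes g: "(x, q, y) \<in> GG" and yb: "y \<in> bdryspace L" shows "x \<in> bdryspace L"
proof -
  obtain al be where ab: "al \<in> x" "be \<in> y" "al \<in> FA L" "be \<in> FA L" "sh L x al = sh L y be"
    "q = deg L al + - deg L be" using wit_FA[OF g] by blast
  have X: "x \<in> XX" "y \<in> XX" using g G_iff by auto
  have xf: "is_filter L x" and yf: "is_filter L y" using X pathspace_filter by auto
  have s: "src L al = src L be" using src_eq xf yf ab by blast
  have bem: "be \<in> mor L" using ab yf F_sub by auto
  have w: "wit P L x q y (deg L al) (deg L be)" using wit_I[OF X ab(1,2,5,6)] .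
  have xe: "x = phi al be y" using phi_eq[OF g w ab(1,2)] .
  let ?Z = "{y \<in> XX. be \<in> y}"
  have c: "continuous_map (subtopology (pathtop L) ?Z) (pathtop L) (phi al be)"
    using phi_cont[OF ab(3) bem s] .
  show ?thesis unfolding bdryspace_def in_closure_of
  proof (intro conjI allI impI)
    show "x \<in> topspace (pathtop L)" using X by simp
    fix T assume T: "x \<in> T \<and> openin (pathtop L) T"
    have "openin (subtopology (pathtop L) ?Z) {u \<in> topspace (subtopology (pathtop L) ?Z). phi al be u \<in> T}"
      using c T unfolding continuous_map by blast
    moreover have "topspace (subtopology (pathtop L) ?Z) = ?Z" by auto
    ultimately have "openin (subtopology (pathtop L) ?Z) {u \<in> ?Z. phi al be u \<in> T}" by simp
    then have O: "openin (pathtop L) {u \<in> ?Z. phi al be u \<in> T}"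
      using openin_trans_full Z_open[OF bem] by blast
    have yin: "y \<in> {u \<in> ?Z. phi al be u \<in> T}" using X ab xe T by auto
    have H: "\<forall>T. y \<in> T \<and> openin (pathtop L) T \<longrightarrow> (\<exists>u. u \<in> ultrafilters L \<inter> XX \<and> u \<in> T)"
      using yb unfolding bdryspace_def in_closure_of by (rule conjunct2)
    obtain y'' where y'': "y'' \<in> ultrafilters L \<inter> XX" "y'' \<in> {u \<in> ?Z. phi al be u \<in> T}"
      using H[rule_format, OF conjI[OF yin O]] by blast
    have "sh L y'' be \<in> ultrafilters L" using ultra_sh y'' by auto
    moreover have "src L al \<in> sh L y'' be" using src_in_sh[OF ultra_filter] y'' s by auto
    ultimately have "phi al be y'' \<in> ultrafilters L"
      unfolding phi_def using ultra_pre ab(3) unfolding FA_def by auto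
    moreover have "phi al be y'' \<in> XX" using phi_in(1)[OF _ _ ab(3) s] y'' by auto
    ultimately show "\<exists>u. u \<in> ultrafilters L \<inter> XX \<and> u \<in> T" using y'' by blast
  qed
qed

end

definition AmpleSp :: "'b topology \<Rightarrow> bool" where
  "AmpleSp X \<longleftrightarrow> (\<forall>U x. openin X U \<and> x \<in> U \<longrightarrow> (\<exists>K. compactin X K \<and> openin X K \<and> x \<in> K \<and> K \<subseteq> U))"

lemma AmpleSp_homeo: assumes h: "homeomorphic_map X Y f" and a: "AmpleSp X" shows "AmpleSp Y"
  unfolding AmpleSp_def
proof (intro allI impI)
  fix U y assume Uy: "openin Y U \<and> y \<in> U"
  obtain g where hm: "homeomorphic_maps X Y f g" using h homeomorphic_map_maps by blast
  note hh = homeomorphic_maps_map[THEN iffD1, OF hm]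
  have hg: "homeomorphic_map Y X g" using hh by (elim conjE)
  have fg: "\<forall>y \<in> topspace Y. f (g y) = y" using hh by (elim conjE)
  have Us: "U \<subseteq> topspace Y" using Uy openin_subset by auto
  have "openin X (g ` U)" using homeomorphic_map_openness[OF hg Us] Uy by blast
  moreover have "g y \<in> g ` U" using Uy by blast
  ultimately obtain K where K: "compactin X K" "openin X K" "g y \<in> K" "K \<subseteq> g ` U"
    using a unfolding AmpleSp_def by blast
  have Ks: "K \<subseteq> topspace X" using K openin_subset by auto
  have "compactin Y (f ` K)" using homeomorphic_map_compactness[OF h Ks] K by blast
  moreover have "openin Y (f ` K)" using homeomorphic_map_openness[OF h Ks] K by blast
  moreover have "y \<in> f ` K" using K(3) fg Us Uy by (metis image_eqI subsetD)
  moreover have "f ` K \<subseteq> U"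
  proof
    fix k assume "k \<in> f ` K"
    then obtain k0 where "k0 \<in> K" "k = f k0" by blast
    then obtain u where "u \<in> U" "k0 = g u" using K(4) by blast
    then show "k \<in> U" using \<open>k = f k0\<close> fg Us by auto
  qed
  ultimately show "\<exists>K. compactin Y K \<and> openin Y K \<and> y \<in> K \<and> K \<subseteq> U" by blast
qed

lemma AmpleSp_lc: "AmpleSp X \<Longrightarrow> locally_compact_space X"
  unfolding AmpleSp_def locally_compact_space_def by (meson openin_topspace)

context pg begin

abbreviation "RR D \<equiv> {(x, q, y) \<in> GG. x \<in> D \<and> y \<in> D}"

definition eu :: "'a set \<Rightarrow> 'a set \<times> 'q \<times> 'a set" where "eu x = (x, 0, x)"

lemma AmpleSp_D: assumes "closedin (pathtop L) D" shows "AmpleSp (subtopology (pathtop L) D)"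
  unfolding AmpleSp_def
proof (intro allI impI)
  fix U x assume Ux: "openin (subtopology (pathtop L) D) U \<and> x \<in> U"
  then obtain Ob where Ob: "openin (pathtop L) Ob" "U = Ob \<inter> D" unfolding openin_subtopology by blast
  obtain K0 where K0: "compactin (pathtop L) K0" "openin (pathtop L) K0" "x \<in> K0" "K0 \<subseteq> Ob"
    using ample_X[OF Ob(1)] Ux Ob(2) by blast
  have "compactin (pathtop L) (D \<inter> K0)" using closed_Int_compactin[OF assms K0(1)] .
  then have "compactin (subtopology (pathtop L) D) (K0 \<inter> D)" unfolding compactin_subtopology by (simp add: Int_commute)
  moreover have "openin (subtopology (pathtop L) D) (K0 \<inter> D)" using K0(2) by (rule openin_subtopology_Int)
  moreover have "x \<in> K0 \<inter> D" "K0 \<inter> D \<subseteq> U" using K0 Ux Ob by auto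
  ultimately show "\<exists>K. compactin (subtopology (pathtop L) D) K \<and> openin (subtopology (pathtop L) D) K \<and> x \<in> K \<and> K \<subseteq> U"
    by blast
qed

context
  fixes D assumes Dsub: "D \<subseteq> XX" and Dcl: "closedin (pathtop L) D"
    and Dinv: "\<And>x q y. (x, q, y) \<in> GG \<Longrightarrow> y \<in> D \<Longrightarrow> x \<in> D"
begin

lemma Dinv2: "(x, q, y) \<in> GG \<Longrightarrow> x \<in> D \<Longrightarrow> y \<in> D"
  using Dinv[of y "- q" x] G_inv by blast

lemma RR_sub: "RR D \<subseteq> GG" by auto

lemma TR_space: "topspace (subtopology TT (RR D)) = RR D"
  using T_space by auto

lemma eD_sub: "eu ` D \<subseteq> RR D"
  using unit_G Dsub unfolding eu_def by auto

lemma units_eq: "tg_units (subtopology TT (RR D)) = eu ` D"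
proof
  show "tg_units (subtopology TT (RR D)) \<subseteq> eu ` D"
  proof
    fix g assume "g \<in> tg_units (subtopology TT (RR D))"
    then have "g \<in> RR D" "fst (snd g) = 0" "snd (snd g) = fst g" unfolding tg_units_def TR_space by auto
    then show "g \<in> eu ` D" unfolding eu_def by (cases g) auto
  qed
  show "eu ` D \<subseteq> tg_units (subtopology TT (RR D))"
    using eD_sub unfolding tg_units_def TR_space eu_def by auto
qed

lemma UT_eq: "subtopology (subtopology TT (RR D)) (tg_units (subtopology TT (RR D))) = subtopology TT (eu ` D)"
  unfolding units_eq subtopology_subtopology using eD_sub by (simp add: Int_absorb1)

lemma sub_RR: "W \<subseteq> RR D \<Longrightarrow> subtopology (subtopology TT (RR D)) W = subtopology TT W"
  unfolding subtopology_subtopology by (simp add: Int_absorb1)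

lemma Eh: "homeomorphic_map (subtopology (pathtop L) D) (subtopology TT (eu ` D)) eu"
  unfolding homeomorphic_map_maps
proof (intro exI[of _ fst])
  show "homeomorphic_maps (subtopology (pathtop L) D) (subtopology TT (eu ` D)) eu fst"
    unfolding homeomorphic_maps_def
  proof (intro conjI)
    have "continuous_map (subtopology (pathtop L) D) TT eu"
      using continuous_map_from_subtopology[OF cont_e] unfolding eu_def[abs_def] .
    then show "continuous_map (subtopology (pathtop L) D) (subtopology TT (eu ` D)) eu"
      unfolding continuous_map_in_subtopology by auto
    have "continuous_map (subtopology TT (eu ` D)) (pathtop L) fst"
      using continuous_map_from_subtopology[OF cont_fst] .
    moreover have "fst \<in> topspace (subtopology TT (eu ` D)) \<rightarrow> D" unfolding eu_def by auto
    ultimately show "continuous_map (subtopology TT (eu ` D)) (subtopology (pathtop L) D) fst"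
      unfolding continuous_map_in_subtopology by auto
    show "\<forall>x\<in>topspace (subtopology (pathtop L) D). fst (eu x) = x" unfolding eu_def by auto
    show "\<forall>y\<in>topspace (subtopology TT (eu ` D)). eu (fst y) = y" unfolding eu_def by auto
  qed
qed

lemma UT_Hausdorff: "Hausdorff_space (subtopology TT (eu ` D))"
  using homeomorphic_Hausdorff_space[OF homeomorphic_map_imp_homeomorphic_space[OF Eh]]
    Hausdorff_space_subtopology[OF pathtop_Hausdorff] by blast

lemma UT_ample: "AmpleSp (subtopology TT (eu ` D))"
  using AmpleSp_homeo[OF Eh AmpleSp_D[OF Dcl]] .

lemma etale_nbhd: assumes g: "g \<in> RR D"
  shows "\<exists>W psi. openin (subtopology TT (RR D)) W \<and> g \<in> W \<and> W \<subseteq> RR D \<and> tg_src ` W \<subseteq> eu ` D \<and>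
     openin (subtopology TT (eu ` D)) (tg_src ` W) \<and>
     homeomorphic_maps (subtopology TT W) (subtopology TT (tg_src ` W)) tg_src psi"
proof -
  obtain x q y where gx: "g = (x, q, y)" by (cases g) auto
  have gG: "(x, q, y) \<in> GG" and xyD: "x \<in> D" "y \<in> D" using g gx by auto
  obtain al be where ab: "al \<in> x" "be \<in> y" "al \<in> FA L" "be \<in> FA L" "sh L x al = sh L y be"
    "q = deg L al + - deg L be" using wit_FA[OF gG] by blast
  have X: "x \<in> XX" "y \<in> XX" using gG G_iff by auto
  have xf: "is_filter L x" and yf: "is_filter L y" using X pathspace_filter by auto
  have s: "src L al = src L be" using src_eq xf yf ab by blast
  have m: "al \<in> mor L" "be \<in> mor L" using ab xf yf F_sub by blast+
  have mnP: "deg L al \<in> P" "deg L be \<in> P" using m deg_P by auto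
  define Za where "Za = {x \<in> XX. al \<in> x}"
  define Zb where "Zb = {x \<in> XX. be \<in> x}"
  define Phi where "Phi = (\<lambda>y'. (phi al be y', q, y'))"
  let ?Wb = "Bs (deg L al) (deg L be) Za Zb"
  let ?W = "?Wb \<inter> RR D"
  have Phi_in: "Phi y' \<in> Bs (deg L al) (deg L be) Za Zb" if yZ: "y' \<in> Zb" for y'
  proof -
    have y': "y' \<in> XX" "be \<in> y'" using yZ Zb_def by auto
    have "(phi al be y', q, y') \<in> GG \<and> wit P L (phi al be y') q y' (deg L al) (deg L be) \<and>
        phi al be y' \<in> Za \<and> y' \<in> Zb"
      using phi_wit[OF y' ab(3) s ab(6)] phi_in[OF y' ab(3) s] y' unfolding Za_def Zb_def by auto
    then show ?thesis unfolding Phi_def by (subst B_iff[OF mnP])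
  qed
  have Weq: "?W = Phi ` (Zb \<inter> D)"
  proof
    show "?W \<subseteq> Phi ` (Zb \<inter> D)"
    proof
      fix g' assume g': "g' \<in> ?W"
      obtain x' q' y' where gx': "g' = (x', q', y')" by (cases g') auto
      have h: "(x', q', y') \<in> GG" "wit P L x' q' y' (deg L al) (deg L be)" "x' \<in> Za" "y' \<in> Zb" "y' \<in> D"
        using g' gx' B_iff[OF mnP] by auto
      have "x' = phi al be y'" using phi_eq[OF h(1,2)] h(3,4) unfolding Za_def Zb_def by auto
      moreover have "q' = q" using h(2) ab(6) unfolding wit_def by auto
      ultimately show "g' \<in> Phi ` (Zb \<inter> D)" using gx' h unfolding Phi_def by auto
    qed
    show "Phi ` (Zb \<inter> D) \<subseteq> ?W"
    proof
      fix g' assume "g' \<in> Phi ` (Zb \<inter> D)"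
      then obtain y' where y': "y' \<in> Zb" "y' \<in> D" "g' = Phi y'" by auto
      have "g' \<in> ?Wb" using Phi_in y' by auto
      moreover have "g' \<in> GG" using calculation by (rule subsetD[OF B_sub])
      moreover then have "fst g' \<in> D" using Dinv y' unfolding Phi_def by auto
      ultimately show "g' \<in> ?W" using y' unfolding Phi_def by auto
    qed
  qed
  have srcW: "tg_src ` ?W = eu ` (Zb \<inter> D)"
    unfolding Weq image_image Phi_def tg_src_def eu_def by simp
  have Zo: "openin (pathtop L) Za" "openin (pathtop L) Zb" unfolding Za_def Zb_def using Z_open m by auto
  have oW: "openin (subtopology TT (RR D)) ?W"
    using B_open[OF mnP Zo] by (rule openin_subtopology_Int)
  have gW: "g \<in> ?W"
  proof -
    have "x = phi al be y" using phi_eq[OF gG wit_I[OF X ab(1,2,5,6)] ab(1,2)] .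
    then have "g = Phi y" using gx unfolding Phi_def by simp
    then show ?thesis using Weq xyD ab X unfolding Zb_def by auto
  qed
  have oS: "openin (subtopology TT (eu ` D)) (tg_src ` ?W)"
  proof -
    have "Bs (deg L be) (deg L be) Zb Zb \<inter> eu ` D = eu ` (Zb \<inter> D)"
    proof
      show "Bs (deg L be) (deg L be) Zb Zb \<inter> eu ` D \<subseteq> eu ` (Zb \<inter> D)"
      proof
        fix u assume u: "u \<in> Bs (deg L be) (deg L be) Zb Zb \<inter> eu ` D"
        then obtain y' where y': "y' \<in> D" "u = (y', 0, y')" unfolding eu_def by auto
        then have "y' \<in> Zb" using u B_iff[OF mnP(2,2)] by auto
        then show "u \<in> eu ` (Zb \<inter> D)" using y' unfolding eu_def by auto
      qed
      show "eu ` (Zb \<inter> D) \<subseteq> Bs (deg L be) (deg L be) Zb Zb \<inter> eu ` D"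
      proof
        fix u assume "u \<in> eu ` (Zb \<inter> D)"
        then obtain y' where y': "y' \<in> Zb" "y' \<in> D" "u = (y', 0, y')" unfolding eu_def by auto
        have "wit P L y' 0 y' (deg L be) (deg L be)" using wit_diag y' unfolding Zb_def by auto
        then show "u \<in> Bs (deg L be) (deg L be) Zb Zb \<inter> eu ` D"
          using y' B_iff[OF mnP(2,2)] unit_G Dsub unfolding eu_def by auto
      qed
    qed
    moreover have "openin (subtopology TT (eu ` D)) (Bs (deg L be) (deg L be) Zb Zb \<inter> eu ` D)"
      using B_open[OF mnP(2,2) Zo(2,2)] by (rule openin_subtopology_Int)
    ultimately show ?thesis using srcW by simp
  qed
  have phic: "continuous_map (subtopology (pathtop L) Zb) (pathtop L) (phi al be)"
    using phi_cont[OF ab(3) m(2) s] unfolding Zb_def .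
  have Phic: "continuous_map (subtopology (pathtop L) Zb) TT Phi"
  proof (rule cont_T)
    fix u assume u: "u \<in> topspace (subtopology (pathtop L) Zb)"
    then have uZ: "u \<in> Zb" using Zb_def by auto
    show "Phi u \<in> GG" using Phi_in[OF uZ] by (rule subsetD[OF B_sub])
    show "\<exists>a d. wit P L (fst (Phi u)) (fst (snd (Phi u))) (snd (snd (Phi u))) a d \<and>
         (\<forall>U V. openin (pathtop L) U \<and> openin (pathtop L) V \<and> Phi u \<in> Bs a d U V \<longrightarrow>
            (\<exists>N. openin (subtopology (pathtop L) Zb) N \<and> u \<in> N \<and> Phi ` N \<subseteq> Bs a d U V))"
    proof (intro exI conjI allI impI)
      show "wit P L (fst (Phi u)) (fst (snd (Phi u))) (snd (snd (Phi u))) (deg L al) (deg L be)"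
        using Phi_in[OF uZ] B_iff[OF mnP] unfolding Phi_def by auto
      fix U V assume UV: "openin (pathtop L) U \<and> openin (pathtop L) V \<and> Phi u \<in> Bs (deg L al) (deg L be) U V"
      let ?N = "{v \<in> topspace (subtopology (pathtop L) Zb). phi al be v \<in> U} \<inter> (Zb \<inter> V)"
      show "openin (subtopology (pathtop L) Zb) ?N"
      proof (rule openin_Int)
        show "openin (subtopology (pathtop L) Zb) {v \<in> topspace (subtopology (pathtop L) Zb). phi al be v \<in> U}"
          using phic UV unfolding continuous_map by blast
        show "openin (subtopology (pathtop L) Zb) (Zb \<inter> V)" using UV by (intro openin_subtopology_Int2) auto
      qed
      show "u \<in> ?N" using UV u uZ B_iff[OF mnP] unfolding Phi_def by auto
      show "Phi ` ?N \<subseteq> Bs (deg L al) (deg L be) U V"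
      proof
        fix w assume "w \<in> Phi ` ?N"
        then obtain v where v: "v \<in> Zb" "phi al be v \<in> U" "v \<in> V" "w = Phi v" by auto
        then show "w \<in> Bs (deg L al) (deg L be) U V" using Phi_in[OF v(1)] B_iff[OF mnP] unfolding Phi_def by auto
      qed
    qed
  qed
  define psi :: "'a set \<times> 'q \<times> 'a set \<Rightarrow> 'a set \<times> 'q \<times> 'a set" where "psi = Phi \<circ> fst"
  have hm: "homeomorphic_maps (subtopology TT ?W) (subtopology TT (tg_src ` ?W)) tg_src psi"
    unfolding homeomorphic_maps_def
  proof (intro conjI)
    show "continuous_map (subtopology TT ?W) (subtopology TT (tg_src ` ?W)) tg_src"
      unfolding continuous_map_in_subtopology
      using continuous_map_from_subtopology[OF cont_src] by auto
    have c1: "continuous_map (subtopology TT (tg_src ` ?W)) (subtopology (pathtop L) Zb) fst"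
      unfolding continuous_map_in_subtopology
      using continuous_map_from_subtopology[OF cont_fst] srcW unfolding eu_def by auto
    have "continuous_map (subtopology TT (tg_src ` ?W)) TT psi"
      unfolding psi_def using continuous_map_compose[OF c1 Phic] .
    moreover have "psi \<in> topspace (subtopology TT (tg_src ` ?W)) \<rightarrow> ?W"
      using srcW Weq unfolding psi_def eu_def by auto
    ultimately show "continuous_map (subtopology TT (tg_src ` ?W)) (subtopology TT ?W) psi"
      unfolding continuous_map_in_subtopology by blast
    show "\<forall>x\<in>topspace (subtopology TT ?W). psi (tg_src x) = x"
      using Weq unfolding psi_def Phi_def tg_src_def by auto
    show "\<forall>y\<in>topspace (subtopology TT (tg_src ` ?W)). tg_src (psi y) = y"
      using srcW unfolding psi_def Phi_def tg_src_def eu_def by auto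
  qed
  have "?W \<subseteq> RR D" by auto
  moreover have "tg_src ` ?W \<subseteq> eu ` D" using srcW by auto
  ultimately show ?thesis using oW gW oS hm by blast
qed

lemma main_ample: "ample (subtopology TT (RR D))"
  unfolding ample_def etale_def topological_groupoid_def UT_eq
proof (intro conjI)
  let ?TR = "subtopology TT (RR D)"
  let ?UT = "subtopology TT (eu ` D)"
  show "continuous_map ?TR ?TR tg_inv"
    unfolding continuous_map_in_subtopology
  proof (intro conjI)
    show "continuous_map ?TR TT tg_inv" using continuous_map_from_subtopology[OF cont_inv] .
    show "tg_inv \<in> topspace ?TR \<rightarrow> RR D"
    proof
      fix g assume "g \<in> topspace ?TR"
      then obtain x q y where g: "g = (x, q, y)" "(x, q, y) \<in> GG" "x \<in> D" "y \<in> D" using TR_space by auto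
      then show "tg_inv g \<in> RR D" using G_inv unfolding tg_inv_def by auto
    qed
  qed
  show "continuous_map (subtopology (prod_topology ?TR ?TR) (tg_composable ?TR)) ?TR tg_mult"
    unfolding continuous_map_in_subtopology
  proof (intro conjI)
    have e: "subtopology (prod_topology ?TR ?TR) (tg_composable ?TR) =
        subtopology (prod_topology TT TT) ((RR D \<times> RR D) \<inter> tg_composable ?TR)"
      unfolding subtopology_Times[symmetric] subtopology_subtopology ..
    have sub: "(RR D \<times> RR D) \<inter> tg_composable ?TR \<subseteq> tg_composable TT"
      unfolding tg_composable_def TR_space T_space by auto
    show c: "continuous_map (subtopology (prod_topology ?TR ?TR) (tg_composable ?TR)) TT tg_mult"
      unfolding e using continuous_map_from_subtopology_mono[OF cont_mult sub] .
    show "tg_mult \<in> topspace (subtopology (prod_topology ?TR ?TR) (tg_composable ?TR)) \<rightarrow> RR D"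
    proof
      fix u assume u: "u \<in> topspace (subtopology (prod_topology ?TR ?TR) (tg_composable ?TR))"
      then have "tg_mult u \<in> GG" using continuous_map_image_subset_topspace[OF c] T_space by auto
      moreover have "fst (tg_mult u) \<in> D" "snd (snd (tg_mult u)) \<in> D"
        using u unfolding tg_mult_def tg_composable_def TR_space by auto
      ultimately show "tg_mult u \<in> RR D" by (cases "tg_mult u") auto
    qed
  qed
  show "Hausdorff_space ?UT" by (rule UT_Hausdorff)
  show "locally_compact_space ?UT" by (rule AmpleSp_lc[OF UT_ample])
  show "\<forall>U x. openin ?UT U \<and> x \<in> U \<longrightarrow> (\<exists>K. compactin ?UT K \<and> openin ?UT K \<and> x \<in> K \<and> K \<subseteq> U)"
    using UT_ample unfolding AmpleSp_def .
  show "\<forall>g\<in>topspace ?TR. \<exists>W. openin ?TR W \<and> g \<in> W \<and> openin ?UT (tg_src ` W) \<and>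
      homeomorphic_map (subtopology ?TR W) (subtopology ?TR (tg_src ` W)) tg_src"
  proof
    fix g assume "g \<in> topspace ?TR"
    then have g: "g \<in> RR D" using TR_space by auto
    obtain W psi where W: "openin ?TR W" "g \<in> W" "W \<subseteq> RR D" "tg_src ` W \<subseteq> eu ` D"
      "openin ?UT (tg_src ` W)" "homeomorphic_maps (subtopology TT W) (subtopology TT (tg_src ` W)) tg_src psi"
      using etale_nbhd[OF g] by blast
    have "tg_src ` W \<subseteq> RR D" using W(4) eD_sub by auto
    then have "homeomorphic_map (subtopology ?TR W) (subtopology ?TR (tg_src ` W)) tg_src"
      unfolding sub_RR[OF W(3)] sub_RR[OF \<open>tg_src ` W \<subseteq> RR D\<close>] homeomorphic_map_maps using W(6) by blast
    then show "\<exists>W. openin ?TR W \<and> g \<in> W \<and> openin ?UT (tg_src ` W) \<and>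
      homeomorphic_map (subtopology ?TR W) (subtopology ?TR (tg_src ` W)) tg_src" using W by blast
  qed
  show "locally_compact_space ?TR"
    unfolding locally_compact_space_def
  proof
    fix g assume "g \<in> topspace ?TR"
    then have g: "g \<in> RR D" using TR_space by auto
    obtain W psi where W: "openin ?TR W" "g \<in> W" "W \<subseteq> RR D" "tg_src ` W \<subseteq> eu ` D"
      "openin ?UT (tg_src ` W)" "homeomorphic_maps (subtopology TT W) (subtopology TT (tg_src ` W)) tg_src psi"
      using etale_nbhd[OF g] by blast
    note hh = homeomorphic_maps_map[THEN iffD1, OF W(6)]
    have hpsi: "homeomorphic_map (subtopology TT (tg_src ` W)) (subtopology TT W) psi" using hh by (elim conjE)
    have inv1: "\<forall>x\<in>topspace (subtopology TT W). psi (tg_src x) = x" using hh by (elim conjE)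
    have gG: "g \<in> GG" using g by auto
    obtain K where K: "compactin ?UT K" "openin ?UT K" "tg_src g \<in> K" "K \<subseteq> tg_src ` W"
      using UT_ample W(2,5) unfolding AmpleSp_def by blast
    have KsW: "K \<subseteq> topspace (subtopology TT (tg_src ` W))"
      using K(4) W(4) eD_sub T_space by auto
    have cK: "compactin (subtopology TT (tg_src ` W)) K"
      using K(1,4) unfolding compactin_subtopology by auto
    obtain Ob where Ob: "openin TT Ob" "K = Ob \<inter> eu ` D" using K(2) unfolding openin_subtopology by blast
    have "K = Ob \<inter> tg_src ` W" using Ob(2) K(4) W(4) by auto
    then have oK: "openin (subtopology TT (tg_src ` W)) K" using Ob(1) openin_subtopology_Int by metis
    have c2: "compactin (subtopology TT W) (psi ` K)" using homeomorphic_map_compactness[OF hpsi KsW] cK by blast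
    have o2: "openin (subtopology TT W) (psi ` K)" using homeomorphic_map_openness[OF hpsi KsW] oK by blast
    have "compactin ?TR (psi ` K)" using c2 W(3) unfolding compactin_subtopology by auto
    moreover have "openin ?TR (psi ` K)" using o2 W(1) unfolding sub_RR[OF W(3), symmetric]
      by (rule openin_trans_full)
    moreover have "g \<in> psi ` K" using inv1 K(3) gG W(2) T_space by (metis IntI image_eqI topspace_subtopology)
    ultimately show "\<exists>U K. openin ?TR U \<and> compactin ?TR K \<and> g \<in> U \<and> U \<subseteq> K" by blast
  qed
qed

end

end

theorem theorem5p18:
  fixes P :: "'q::group_add set" and L :: "('a, 'q) pgraph"
  assumes "wqlo P" and "is_Pgraph P L" and "FA L \<noteq> {}"
  shows "ample (pathgpd_top P L) \<and> second_countable (pathgpd_top P L) \<and>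
           Hausdorff_space (pathgpd_top P L) \<and>
         ample (bdrygpd_top P L) \<and> second_countable (bdrygpd_top P L) \<and>
           Hausdorff_space (bdrygpd_top P L)"
proof -
  interpret pg P L using assms(1,2) by (rule pg.intro)
  have R1: "{(x, q, y) \<in> pathgpd P L. x \<in> pathspace L \<and> y \<in> pathspace L} = pathgpd P L"
    unfolding pathgpd_def by auto
  have T1: "subtopology (pathgpd_top P L) {(x, q, y) \<in> pathgpd P L. x \<in> pathspace L \<and> y \<in> pathspace L} = pathgpd_top P L"
  proof -
    have "subtopology (pathgpd_top P L) (pathgpd P L) = pathgpd_top P L"
      using subtopology_topspace[of "pathgpd_top P L"] T_space by simp
    then show ?thesis by (simp only: R1)
  qed
  have cl: "closedin (pathtop L) (pathspace L)"
    using closedin_topspace[of "pathtop L"] by simp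
  have a1: "ample (pathgpd_top P L)"
    using main_ample[of "pathspace L"] cl G_iff unfolding T1 by blast
  have a2: "ample (bdrygpd_top P L)"
    unfolding bdrygpd_top_def by (rule main_ample[OF bdry_sub bdry_closed]) (erule (1) bdry_inv)
  show ?thesis
    using a1 a2 T_second_countable T_Hausdorff
    unfolding bdrygpd_top_def
    by (simp add: second_countable_subtopology Hausdorff_space_subtopology)
qed


end
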